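(* Let $d\ge1$ and let $K$ be a real-valued covariance kernel on $\mathbb R^d\times\mathbb R^d$ of class $\mathcal C^{\infty,\infty}_b$. For every integer $M\ge0$ and every integer $\ell\ge0$ there exists a finite constant $A>0$, independent of $n$ and $R$, such that for every $R\ge1$ the eigenvalues $\lambda^{(M,R)}_1\ge\lambda^{(M,R)}_2\ge\cdots\ge0$ of $K^{(M,R)}$ satisfy $$\lambda_n^{(M,R)}\le A\,\frac{R^{\ell+1+d}}{n^{\frac{\ell+1}d}},\qquad n\ge1.$$
   Context: $\mathcal C^{\infty,\infty}_b$: infinitely continuously differentiable in each variable with all derivatives bounded. $K_{\alpha\beta}(x,y)=\partial_x^\alpha\partial_y^\beta K(x,y)$. $S(M)$ is the set of multi-indices $\alpha\in\mathbb N^d$ with $|\alpha|\le M$. $B_R$ is the open ball of radius $R$ centred at $0$. $L^2_{S(M)}(B_R)$ is the Hilbert space of square-integrable $\mathbb R^{S(M)}$-valued functions $f=(f_\alpha)_{\alpha\in S(M)}$ on $B_R$ with $\langle f,g\rangle=\sum_{\alpha\in S(M)}\int_{B_R}f_\alpha g_\alpha$. The operator $K^{(M,R)}$ on $L^2_{S(M)}(B_R)$ is $(K^{(M,R)}f)_\alpha(x)=\sum_{\beta\in S(M)}\int_{B_R}K_{\alpha\beta}(x,y)f_\beta(y)\,dy$; it is compact, self-adjoint and positive, and its eigenvalues are listed in decreasing order with multiplicity. *)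

theory Defs
  imports "HOL-Analysis.Analysis" "HOL-Library.Extended_Nat"
begin

text \<open>Iterated directional derivatives: the head of the list is applied last.\<close>
fun dd :: "('a::real_normed_vector) list \<Rightarrow> ('a \<Rightarrow> real) \<Rightarrow> 'a \<Rightarrow> real" where
  "dd [] f = f"
| "dd (v # vs) f = (\<lambda>z. deriv (\<lambda>t. dd vs f (z + t *\<^sub>R v)) 0)"

definition basis_dirs :: "((real^'d) \<times> (real^'d)) set" where
  "basis_dirs = {(axis i 1, 0) | i. True} \<union> {(0, axis i 1) | i. True}"

definition joint :: "(real^'d \<Rightarrow> real^'d \<Rightarrow> real) \<Rightarrow> ((real^'d) \<times> (real^'d)) \<Rightarrow> real" where
  "joint K = (\<lambda>z. K (fst z) (snd z))"

definition Cinf_b :: "(real^'d \<Rightarrow> real^'d \<Rightarrow> real) \<Rightarrow> bool" where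
  "Cinf_b K \<longleftrightarrow> (\<forall>vs. set vs \<subseteq> basis_dirs \<longrightarrow>
      continuous_on UNIV (dd vs (joint K)) \<and> bounded (range (dd vs (joint K))) \<and>
      (\<forall>v\<in>basis_dirs. \<forall>z. ((\<lambda>t. dd vs (joint K) (z + t *\<^sub>R v))
           has_real_derivative dd (v # vs) (joint K) z) (at 0)))"

definition covariance_kernel :: "('a \<Rightarrow> 'a \<Rightarrow> real) \<Rightarrow> bool" where
  "covariance_kernel K \<longleftrightarrow> (\<forall>x y. K x y = K y x) \<and>
     (\<forall>(n::nat) (xs::nat \<Rightarrow> 'a) (c::nat \<Rightarrow> real).
        (\<Sum>i<n. \<Sum>j<n. c i * c j * K (xs i) (xs j)) \<ge> 0)"

definition S :: "nat \<Rightarrow> ('d::finite \<Rightarrow> nat) set" where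
  "S M = {\<alpha>. sum \<alpha> UNIV \<le> M}"

definition coord_list :: "('d::finite \<Rightarrow> nat) \<Rightarrow> 'd list" where
  "coord_list \<alpha> = concat (map (\<lambda>i. replicate (\<alpha> i) i) (SOME xs. distinct xs \<and> set xs = UNIV))"

text \<open>K_{alpha beta}(x,y) = d_x^alpha d_y^beta K(x,y).\<close>
definition Kab :: "(real^'d \<Rightarrow> real^'d \<Rightarrow> real) \<Rightarrow> ('d \<Rightarrow> nat) \<Rightarrow> ('d \<Rightarrow> nat)
    \<Rightarrow> real^'d \<Rightarrow> real^'d \<Rightarrow> real" where
  "Kab K \<alpha> \<beta> x y = dd (map (\<lambda>i. (axis i 1, 0)) (coord_list \<alpha>) @
                         map (\<lambda>i. (0, axis i 1)) (coord_list \<beta>)) (joint K) (x, y)"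

text \<open>Membership in L^2_{S(M)}(B_R) (functions represented pointwise, components indexed by S(M)).\<close>
definition L2S :: "nat \<Rightarrow> real \<Rightarrow> (real^'d \<Rightarrow> ('d \<Rightarrow> nat) \<Rightarrow> real) \<Rightarrow> bool" where
  "L2S M R f \<longleftrightarrow> (\<forall>\<beta>\<in>S M. (\<lambda>y. indicator (ball 0 R) y * f y \<beta>) \<in> borel_measurable lborel \<and>
                         set_integrable lborel (ball 0 R) (\<lambda>y. (f y \<beta>)^2))"

definition Kop :: "(real^'d \<Rightarrow> real^'d \<Rightarrow> real) \<Rightarrow> nat \<Rightarrow> real
    \<Rightarrow> (real^'d \<Rightarrow> ('d \<Rightarrow> nat) \<Rightarrow> real) \<Rightarrow> real^'d \<Rightarrow> ('d \<Rightarrow> nat) \<Rightarrow> real" where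
  "Kop K M R f x \<alpha> = (\<Sum>\<beta>\<in>S M. LINT y:ball 0 R|lborel. Kab K \<alpha> \<beta> x y * f y \<beta>)"

definition is_eigfun :: "(real^'d \<Rightarrow> real^'d \<Rightarrow> real) \<Rightarrow> nat \<Rightarrow> real \<Rightarrow> real
    \<Rightarrow> (real^'d \<Rightarrow> ('d \<Rightarrow> nat) \<Rightarrow> real) \<Rightarrow> bool" where
  "is_eigfun K M R \<mu> f \<longleftrightarrow> L2S M R f \<and>
     (\<forall>\<alpha>\<in>S M. AE x in lborel. x \<in> ball 0 R \<longrightarrow> Kop K M R f x \<alpha> = \<mu> * f x \<alpha>)"

text \<open>Number of eigenvalues strictly greater than t, counted with multiplicity:
  the dimension (in L^2, i.e. modulo a.e. equality) of the span of eigenspaces for eigenvalues > t.\<close>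
definition count_above :: "(real^'d \<Rightarrow> real^'d \<Rightarrow> real) \<Rightarrow> nat \<Rightarrow> real \<Rightarrow> real \<Rightarrow> enat" where
  "count_above K M R t = Sup {enat k | k. \<exists>(fs :: nat \<Rightarrow> real^'d \<Rightarrow> ('d \<Rightarrow> nat) \<Rightarrow> real) \<mu>s.
      (\<forall>i<k. \<mu>s i > t \<and> is_eigfun K M R (\<mu>s i) (fs i)) \<and>
      (\<forall>c::nat \<Rightarrow> real. (\<forall>\<alpha>\<in>S M. AE x in lborel. x \<in> ball 0 R \<longrightarrow> (\<Sum>i<k. c i * fs i x \<alpha>) = 0)
                 \<longrightarrow> (\<forall>i<k. c i = 0))}"

text \<open>The n-th eigenvalue (n >= 1) in decreasing order, counted with multiplicity
  (equal to 0 if there are fewer than n positive eigenvalues).\<close>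
definition eigval :: "(real^'d \<Rightarrow> real^'d \<Rightarrow> real) \<Rightarrow> nat \<Rightarrow> real \<Rightarrow> nat \<Rightarrow> real" where
  "eigval K M R n = Inf {t. 0 \<le> t \<and> count_above K M R t < enat n}"

end

theory Submission
  imports Defs
begin

lemma dd_append: "dd (vs @ ws) f = dd vs (dd ws f)"
  by (induction vs) auto

lemma finite_basis_dirs: "finite (basis_dirs :: ((real^'d) \<times> (real^'d)) set)"
proof -
  have "(basis_dirs :: ((real^'d) \<times> (real^'d)) set) = (\<lambda>i. (axis i 1, 0)) ` (UNIV::'d set) \<union> (\<lambda>i. (0, axis i (1::real))) ` UNIV"
    unfolding basis_dirs_def by auto
  then show ?thesis by (metis finite_UnI finite_imageI finite_class.finite_UNIV)
qed

lemma axis_in_basis_dirs [simp]: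
  "(axis i 1, 0) \<in> basis_dirs" "(0, axis i 1) \<in> basis_dirs"
  unfolding basis_dirs_def by auto

lemma deriv_shift_line:
  fixes f :: "'a::real_normed_vector \<Rightarrow> real"
  assumes "\<And>z. ((\<lambda>s. f (z + s *\<^sub>R v)) has_real_derivative f' z) (at 0)"
  shows "((\<lambda>s. f (z + s *\<^sub>R v)) has_real_derivative f' (z + t *\<^sub>R v)) (at t)"
proof -
  have "((\<lambda>s. f ((z + t *\<^sub>R v) + s *\<^sub>R v)) has_real_derivative f' (z + t *\<^sub>R v)) (at 0)"
    by (rule assms)
  moreover have "(\<lambda>s. f ((z + t *\<^sub>R v) + s *\<^sub>R v)) = (\<lambda>s. (\<lambda>s. f (z + s *\<^sub>R v)) (s + t))"
    by (simp add: algebra_simps)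
  ultimately show ?thesis using DERIV_shift[of "\<lambda>s. f (z + s *\<^sub>R v)" "f' (z + t *\<^sub>R v)" 0 t]
    by simp
qed

lemma schwarz_step:
  fixes g gu gwu :: "'a::real_normed_vector \<Rightarrow> real"
  assumes gu: "\<And>z. ((\<lambda>s. g (z + s *\<^sub>R u)) has_real_derivative gu z) (at 0)"
    and gwu: "\<And>z. ((\<lambda>s. gu (z + s *\<^sub>R w)) has_real_derivative gwu z) (at 0)"
    and h: "h > 0"
  shows "\<exists>\<zeta>. norm (\<zeta> - z) \<le> h * (norm u + norm w) \<and>
     g (z + h *\<^sub>R u + h *\<^sub>R w) - g (z + h *\<^sub>R u) - g (z + h *\<^sub>R w) + g z = h^2 * gwu \<zeta>"
proof -
  define p where "p s = g ((z + h *\<^sub>R w) + s *\<^sub>R u) - g (z + s *\<^sub>R u)" for s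
  have dp: "(p has_real_derivative (gu ((z + h *\<^sub>R w) + s *\<^sub>R u) - gu (z + s *\<^sub>R u))) (at s)" for s
    unfolding p_def
    by (rule DERIV_diff; rule deriv_shift_line[where f=g]; rule gu)
  obtain s1 where s1: "0 < s1" "s1 < h" "p h - p 0 = (h - 0) * (gu ((z + h *\<^sub>R w) + s1 *\<^sub>R u) - gu (z + s1 *\<^sub>R u))"
    using MVT2[of 0 h p "\<lambda>s. gu ((z + h *\<^sub>R w) + s *\<^sub>R u) - gu (z + s *\<^sub>R u)"] h dp by auto
  define q where "q t = gu ((z + s1 *\<^sub>R u) + t *\<^sub>R w)" for t
  have dq: "(q has_real_derivative gwu ((z + s1 *\<^sub>R u) + t *\<^sub>R w)) (at t)" for t
    unfolding q_def by (rule deriv_shift_line[where f=gu]) (rule gwu)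
  obtain t1 where t1: "0 < t1" "t1 < h" "q h - q 0 = (h - 0) * gwu ((z + s1 *\<^sub>R u) + t1 *\<^sub>R w)"
    using MVT2[of 0 h q "\<lambda>t. gwu ((z + s1 *\<^sub>R u) + t *\<^sub>R w)"] h dq by auto
  have qh: "q h - q 0 = gu ((z + h *\<^sub>R w) + s1 *\<^sub>R u) - gu (z + s1 *\<^sub>R u)"
    unfolding q_def by (simp add: algebra_simps)
  have "norm (((z + s1 *\<^sub>R u) + t1 *\<^sub>R w) - z) \<le> norm (s1 *\<^sub>R u) + norm (t1 *\<^sub>R w)"
    using norm_triangle_ineq[of "s1 *\<^sub>R u" "t1 *\<^sub>R w"] by (simp add: algebra_simps)
  also have "\<dots> \<le> h * norm u + h * norm w"
    using s1 t1 by (intro add_mono mult_right_mono) (auto simp: mult_right_mono)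
  finally have nz: "norm (((z + s1 *\<^sub>R u) + t1 *\<^sub>R w) - z) \<le> h * (norm u + norm w)"
    by (simp add: algebra_simps)
  have "g (z + h *\<^sub>R u + h *\<^sub>R w) - g (z + h *\<^sub>R u) - g (z + h *\<^sub>R w) + g z = p h - p 0"
    unfolding p_def by (simp add: algebra_simps)
  also have "\<dots> = h^2 * gwu ((z + s1 *\<^sub>R u) + t1 *\<^sub>R w)"
    using s1(3) t1(3) qh by (simp add: power2_eq_square)
  finally show ?thesis using nz by blast
qed

lemma schwarz:
  fixes g gu gw gwu guw :: "'a::real_normed_vector \<Rightarrow> real"
  assumes gu: "\<And>z. ((\<lambda>s. g (z + s *\<^sub>R u)) has_real_derivative gu z) (at 0)"
    and gw: "\<And>z. ((\<lambda>s. g (z + s *\<^sub>R w)) has_real_derivative gw z) (at 0)"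
    and gwu: "\<And>z. ((\<lambda>s. gu (z + s *\<^sub>R w)) has_real_derivative gwu z) (at 0)"
    and guw: "\<And>z. ((\<lambda>s. gw (z + s *\<^sub>R u)) has_real_derivative guw z) (at 0)"
    and c1: "continuous_on UNIV gwu" and c2: "continuous_on UNIV guw"
  shows "gwu z = guw z"
proof (rule ccontr)
  assume ne: "gwu z \<noteq> guw z"
  define e where "e = \<bar>gwu z - guw z\<bar> / 2"
  have e: "e > 0" using ne by (simp add: e_def)
  have "isCont gwu z" "isCont guw z" using c1 c2 by (simp_all add: continuous_on_eq_continuous_at)
  obtain d1 where d1: "d1 > 0" "\<forall>y. dist y z < d1 \<longrightarrow> dist (gwu y) (gwu z) < e"
    using \<open>isCont gwu z\<close> e unfolding continuous_at_eps_delta by blast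
  obtain d2 where d2: "d2 > 0" "\<forall>y. dist y z < d2 \<longrightarrow> dist (guw y) (guw z) < e"
    using \<open>isCont guw z\<close> e unfolding continuous_at_eps_delta by blast
  define h where "h = min d1 d2 / (2 * (norm u + norm w + 1))"
  have pos: "2 * (norm u + norm w + 1) > 0"
    by (smt (verit) norm_ge_zero)
  have h: "h > 0" using d1 d2 pos unfolding h_def by (intro divide_pos_pos) auto
  have hb: "h * (norm u + norm w) < min d1 d2"
  proof -
    have "h * (norm u + norm w) \<le> h * (norm u + norm w + 1)" using h by simp
    also have "\<dots> = min d1 d2 / 2" unfolding h_def using pos by (simp add: field_simps)
    also have "\<dots> < min d1 d2" using d1(1) d2(1) by (simp add: min_def)
    finally show ?thesis .
  qed
  obtain z1 where z1: "norm (z1 - z) \<le> h * (norm u + norm w)"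
    "g (z + h *\<^sub>R u + h *\<^sub>R w) - g (z + h *\<^sub>R u) - g (z + h *\<^sub>R w) + g z = h^2 * gwu z1"
    using schwarz_step[OF gu gwu h] by blast
  obtain z2 where z2: "norm (z2 - z) \<le> h * (norm w + norm u)"
    "g (z + h *\<^sub>R w + h *\<^sub>R u) - g (z + h *\<^sub>R w) - g (z + h *\<^sub>R u) + g z = h^2 * guw z2"
    using schwarz_step[OF gw guw h] by blast
  have "h^2 * gwu z1 = h^2 * guw z2" using z1(2) z2(2) by (simp add: algebra_simps)
  then have eq: "gwu z1 = guw z2" using h by simp
  have "dist z1 z < d1" using z1(1) hb by (simp add: dist_norm)
  then have a: "\<bar>gwu z1 - gwu z\<bar> < e" using d1 by (simp add: dist_real_def)
  have "dist z2 z < d2" using z2(1) hb by (simp add: dist_norm add.commute)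
  then have b: "\<bar>guw z2 - guw z\<bar> < e" using d2 by (simp add: dist_real_def)
  have "\<bar>gwu z - guw z\<bar> < 2 * e" using a b eq by linarith
  then show False by (simp add: e_def)
qed

context
  fixes K :: "real^'d \<Rightarrow> real^'d \<Rightarrow> real"
  assumes CK: "Cinf_b K"
begin

lemma Cb_cont: "set vs \<subseteq> basis_dirs \<Longrightarrow> continuous_on UNIV (dd vs (joint K))"
  using CK unfolding Cinf_b_def by blast

lemma Cb_bounded: "set vs \<subseteq> basis_dirs \<Longrightarrow> bounded (range (dd vs (joint K)))"
  using CK unfolding Cinf_b_def by blast

lemma Cb_deriv: "set vs \<subseteq> basis_dirs \<Longrightarrow> v \<in> basis_dirs \<Longrightarrow>
   ((\<lambda>t. dd vs (joint K) (z + t *\<^sub>R v)) has_real_derivative dd (v # vs) (joint K) z) (at 0)"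
  using CK unfolding Cinf_b_def by blast

lemma Cb_deriv_at: "set vs \<subseteq> basis_dirs \<Longrightarrow> v \<in> basis_dirs \<Longrightarrow>
   ((\<lambda>t. dd vs (joint K) (z + t *\<^sub>R v)) has_real_derivative dd (v # vs) (joint K) (z + s *\<^sub>R v)) (at s)"
  by (rule deriv_shift_line) (rule Cb_deriv)

lemma Cb_swap2:
  assumes "set vs \<subseteq> basis_dirs" "u \<in> basis_dirs" "w \<in> basis_dirs"
  shows "dd (w # u # vs) (joint K) = dd (u # w # vs) (joint K)"
proof
  fix z
  show "dd (w # u # vs) (joint K) z = dd (u # w # vs) (joint K) z"
  proof (rule schwarz[where g = "dd vs (joint K)" and gu = "dd (u # vs) (joint K)" and gw = "dd (w # vs) (joint K)"])
    show "((\<lambda>s. dd vs (joint K) (z + s *\<^sub>R u)) has_real_derivative dd (u # vs) (joint K) z) (at 0)" for z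
      using assms by (intro Cb_deriv) auto
    show "((\<lambda>s. dd vs (joint K) (z + s *\<^sub>R w)) has_real_derivative dd (w # vs) (joint K) z) (at 0)" for z
      using assms by (intro Cb_deriv) auto
    show "((\<lambda>s. dd (u # vs) (joint K) (z + s *\<^sub>R w)) has_real_derivative dd (w # u # vs) (joint K) z) (at 0)" for z
      using assms by (intro Cb_deriv) auto
    show "((\<lambda>s. dd (w # vs) (joint K) (z + s *\<^sub>R u)) has_real_derivative dd (u # w # vs) (joint K) z) (at 0)" for z
      using assms by (intro Cb_deriv) auto
    show "continuous_on UNIV (dd (w # u # vs) (joint K))" using assms by (intro Cb_cont) auto
    show "continuous_on UNIV (dd (u # w # vs) (joint K))" using assms by (intro Cb_cont) auto
  qed
qed

lemma Cb_swap2':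
  assumes "set (pre @ a # b # suf) \<subseteq> basis_dirs"
  shows "dd (pre @ a # b # suf) (joint K) = dd (pre @ b # a # suf) (joint K)"
proof -
  have "dd (a # b # suf) (joint K) = dd (b # a # suf) (joint K)"
    using assms by (intro Cb_swap2) auto
  then show ?thesis by (simp add: dd_append)
qed

lemma Cb_move:
  assumes "set (pre @ a # ws @ suf) \<subseteq> basis_dirs"
  shows "dd (pre @ a # ws @ suf) (joint K) = dd (pre @ ws @ a # suf) (joint K)"
  using assms
proof (induction ws arbitrary: pre)
  case Nil
  then show ?case by simp
next
  case (Cons w ws)
  have "dd (pre @ a # (w # ws) @ suf) (joint K) = dd (pre @ w # a # ws @ suf) (joint K)"
    using Cb_swap2'[of pre a w "ws @ suf"] Cons.prems by simp
  also have "\<dots> = dd ((pre @ [w]) @ a # ws @ suf) (joint K)" by simp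
  also have "\<dots> = dd ((pre @ [w]) @ ws @ a # suf) (joint K)"
    using Cons.IH[of "pre @ [w]"] Cons.prems by simp
  finally show ?case by simp
qed

lemma Cb_comm:
  assumes "set (pre @ xs @ ys @ suf) \<subseteq> basis_dirs"
  shows "dd (pre @ xs @ ys @ suf) (joint K) = dd (pre @ ys @ xs @ suf) (joint K)"
  using assms
proof (induction xs arbitrary: pre)
  case Nil
  then show ?case by simp
next
  case (Cons x xs)
  have "dd (pre @ (x # xs) @ ys @ suf) (joint K) = dd ((pre @ [x]) @ xs @ ys @ suf) (joint K)" by simp
  also have "\<dots> = dd ((pre @ [x]) @ ys @ xs @ suf) (joint K)"
    using Cons.IH[of "pre @ [x]"] Cons.prems by simp
  also have "\<dots> = dd (pre @ x # ys @ (xs @ suf)) (joint K)" by simp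
  also have "\<dots> = dd (pre @ ys @ x # (xs @ suf)) (joint K)"
    by (rule Cb_move) (use Cons.prems in auto)
  finally show ?case by simp
qed

end

lemma dd_swap:
  "dd vs (\<lambda>z. f (prod.swap z)) z = dd (map prod.swap vs) f (prod.swap z)"
proof (induction vs arbitrary: z)
  case Nil
  then show ?case by simp
next
  case (Cons v vs)
  have "\<And>t. prod.swap (z + t *\<^sub>R v) = prod.swap z + t *\<^sub>R prod.swap v"
    by (cases z, cases v) simp
  then show ?case using Cons by simp
qed

lemma joint_swap:
  assumes "covariance_kernel K"
  shows "joint K = (\<lambda>z. joint K (prod.swap z))"
  using assms unfolding covariance_kernel_def joint_def by auto

lemma Kab_sym:
  fixes K :: "real^'d \<Rightarrow> real^'d \<Rightarrow> real"
  assumes cov: "covariance_kernel K" and CK: "Cinf_b K"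
  shows "Kab K \<alpha> \<beta> x y = Kab K \<beta> \<alpha> y x"
proof -
  define X where "X a = map (\<lambda>i. (axis i (1::real), 0::real^'d)) (coord_list a)" for a :: "'d \<Rightarrow> nat"
  define Y where "Y a = map (\<lambda>i. (0::real^'d, axis i (1::real))) (coord_list a)" for a :: "'d \<Rightarrow> nat"
  have sX: "set (X a) \<subseteq> basis_dirs" "set (Y a) \<subseteq> basis_dirs" for a
    unfolding X_def Y_def by auto
  have "Kab K \<beta> \<alpha> y x = dd (X \<beta> @ Y \<alpha>) (joint K) (y, x)"
    unfolding Kab_def X_def Y_def by simp
  also have "\<dots> = dd (X \<beta> @ Y \<alpha>) (\<lambda>z. joint K (prod.swap z)) (y, x)"
    using joint_swap[OF cov] by metis
  also have "\<dots> = dd (map prod.swap (X \<beta> @ Y \<alpha>)) (joint K) (x, y)"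
    by (simp add: dd_swap)
  also have "map prod.swap (X \<beta> @ Y \<alpha>) = Y \<beta> @ X \<alpha>"
    unfolding X_def Y_def by simp
  also have "dd (Y \<beta> @ X \<alpha>) (joint K) = dd (X \<alpha> @ Y \<beta>) (joint K)"
    using Cb_comm[OF CK, of "[]" "Y \<beta>" "X \<alpha>" "[]"] sX by simp
  also have "dd (X \<alpha> @ Y \<beta>) (joint K) (x, y) = Kab K \<alpha> \<beta> x y"
    unfolding Kab_def X_def Y_def by simp
  finally show ?thesis ..
qed

lemma Cb_uniform_bound:
  fixes K :: "real^'d \<Rightarrow> real^'d \<Rightarrow> real"
  assumes CK: "Cinf_b K"
  shows "\<exists>Bd. \<forall>ws. set ws \<subseteq> basis_dirs \<and> length ws \<le> L \<longrightarrow> (\<forall>z. \<bar>dd ws (joint K) z\<bar> \<le> Bd)"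
proof -
  define W where "W = {ws. set ws \<subseteq> (basis_dirs :: ((real^'d) \<times> (real^'d)) set) \<and> length ws \<le> L}"
  have fW: "finite W" unfolding W_def by (rule finite_lists_length_le[OF finite_basis_dirs])
  have "\<forall>ws\<in>W. \<exists>b. \<forall>z. \<bar>dd ws (joint K) z\<bar> \<le> b"
  proof
    fix ws assume "ws \<in> W"
    then have "bounded (range (dd ws (joint K)))" using Cb_bounded[OF CK] unfolding W_def by blast
    then obtain a where "\<forall>x\<in>range (dd ws (joint K)). norm x \<le> a" unfolding bounded_iff by blast
    then show "\<exists>b. \<forall>z. \<bar>dd ws (joint K) z\<bar> \<le> b" by auto
  qed
  then obtain bf where bf: "\<forall>ws\<in>W. \<forall>z. \<bar>dd ws (joint K) z\<bar> \<le> bf ws" by metis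
  have "\<forall>ws\<in>W. \<forall>z. \<bar>dd ws (joint K) z\<bar> \<le> (\<Sum>w\<in>W. \<bar>bf w\<bar>)"
  proof (intro ballI allI)
    fix ws z assume "ws \<in> W"
    then have "\<bar>dd ws (joint K) z\<bar> \<le> bf ws" using bf by blast
    then have "\<bar>dd ws (joint K) z\<bar> \<le> \<bar>bf ws\<bar>" by linarith
    also have "\<dots> \<le> (\<Sum>w\<in>W. \<bar>bf w\<bar>)" using \<open>ws \<in> W\<close> fW by (intro member_le_sum) auto
    finally show "\<bar>dd ws (joint K) z\<bar> \<le> (\<Sum>w\<in>W. \<bar>bf w\<bar>)" .
  qed
  then show ?thesis unfolding W_def by blast
qed

definition upd :: "real^'d \<Rightarrow> 'd \<Rightarrow> real \<Rightarrow> real^'d" where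
  "upd y i v = (\<chi> k. if k = i then v else y $ k)"

lemma upd_nth [simp]: "upd y i v $ k = (if k = i then v else y $ k)"
  unfolding upd_def by simp

fun T :: "(real^'d \<Rightarrow> real^'d \<Rightarrow> real) \<Rightarrow> nat \<Rightarrow> 'd list \<Rightarrow> ((real^'d) \<times> (real^'d)) list
    \<Rightarrow> real^'d \<Rightarrow> real^'d \<Rightarrow> real^'d \<Rightarrow> real" where
  "T K l [] vs c x y = dd vs (joint K) (x, c)"
| "T K l (i # is) vs c x y = (\<Sum>j\<le>l. T K l is (replicate j (0, axis i 1) @ vs) c x (upd y i (c $ i))
      * (y $ i - c $ i) ^ j / fact j)"

lemma div_le_self_real: "0 \<le> (P::real) \<Longrightarrow> 1 \<le> f \<Longrightarrow> P / f \<le> P"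
  by (smt (verit) divide_le_eq mult_le_cancel_left1)

lemma sum_zero_power_fact: "(\<Sum>j\<le>l. a j * (0::real) ^ j / fact j) = a 0"
  by (induction l) auto

lemma T_err:
  fixes K :: "real^'d \<Rightarrow> real^'d \<Rightarrow> real"
  assumes CK: "Cinf_b K"
    and Bd: "\<forall>ws. set ws \<subseteq> basis_dirs \<and> length ws \<le> L \<longrightarrow> (\<forall>z. \<bar>dd ws (joint K) z\<bar> \<le> Bd)"
    and h: "0 \<le> h" "h \<le> 1"
  shows "distinct is \<Longrightarrow> set vs \<subseteq> basis_dirs \<Longrightarrow> length vs + (l+1) * length is \<le> L \<Longrightarrow>
    (\<forall>k. k \<notin> set is \<longrightarrow> y $ k = c $ k) \<Longrightarrow> (\<forall>k. \<bar>y $ k - c $ k\<bar> \<le> h) \<Longrightarrow>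
    \<bar>dd vs (joint K) (x, y) - T K l is vs c x y\<bar> \<le> Bd * h ^ (l+1) * (l+2) ^ (length is)"
proof -
  have "\<bar>dd [] (joint K) 0\<bar> \<le> Bd" using Bd[rule_format, of "[]" 0] by simp
  then have Bd0: "Bd \<ge> 0" by (smt (verit) abs_ge_zero)
  show "distinct is \<Longrightarrow> set vs \<subseteq> basis_dirs \<Longrightarrow> length vs + (l+1) * length is \<le> L \<Longrightarrow>
    (\<forall>k. k \<notin> set is \<longrightarrow> y $ k = c $ k) \<Longrightarrow> (\<forall>k. \<bar>y $ k - c $ k\<bar> \<le> h) \<Longrightarrow>
    \<bar>dd vs (joint K) (x, y) - T K l is vs c x y\<bar> \<le> Bd * h ^ (l+1) * (l+2) ^ (length is)"
proof (induction "is" arbitrary: vs y)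
  case Nil
  then have "y = c" by (simp add: vec_eq_iff)
  then show ?case using Bd0 h by simp
next
  case (Cons i "is")
  define e :: "(real^'d) \<times> (real^'d)" where "e = (0, axis i 1)"
  have e: "e \<in> basis_dirs" unfolding e_def by simp
  define y0 where "y0 = upd y i (c $ i)"
  define X where "X = y $ i - c $ i"
  define vsj where "vsj j = replicate j e @ vs" for j
  have svsj: "set (vsj j) \<subseteq> basis_dirs" for j using Cons.prems e unfolding vsj_def by auto
  have lvsj: "length (vsj j) = j + length vs" for j unfolding vsj_def by simp
  have xy: "(x, y) = (x, y0) + X *\<^sub>R e"
    unfolding e_def y0_def X_def by (simp add: vec_eq_iff axis_def)
  have hX: "\<bar>X\<bar> \<le> h" using Cons.prems(5) unfolding X_def by blast
  define E where "E = Bd * h ^ (l+1) * (l+2) ^ (length is)"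
  have taylor: "\<bar>dd vs (joint K) (x, y) - (\<Sum>j\<le>l. dd (vsj j) (joint K) (x, y0) * X ^ j / fact j)\<bar> \<le> Bd * h ^ (l+1)"
  proof (cases "X = 0")
    case True
    then have "y = y0" using xy unfolding e_def by simp
    then show ?thesis using True Bd0 h by (simp add: sum_zero_power_fact vsj_def)
  next
    case False
    define diff where "diff m s = dd (vsj m) (joint K) ((x, y0) + s *\<^sub>R e)" for m s
    have dv: "\<forall>m t. m < l + 1 \<and> min 0 X \<le> t \<and> t \<le> max 0 X \<longrightarrow> DERIV (diff m) t :> diff (Suc m) t"
    proof (intro allI impI)
      fix m t
      show "DERIV (diff m) t :> diff (Suc m) t"
        unfolding diff_def using Cb_deriv_at[OF CK svsj[of m] e, where z="(x, y0)" and s=t]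
        by (simp add: vsj_def)
    qed
    have "\<exists>t. (if X < 0 then X < t \<and> t < 0 else 0 < t \<and> t < X) \<and>
      diff 0 X = (\<Sum>m<l+1. diff m 0 / fact m * (X - 0) ^ m) + diff (l+1) t / fact (l+1) * (X - 0) ^ (l+1)"
      by (rule Taylor[of "l+1" diff "diff 0" "min 0 X" "max 0 X" 0 X, OF _ refl dv]) (use False in auto)
    then obtain t where t: 
      "diff 0 X = (\<Sum>m<l+1. diff m 0 / fact m * (X - 0) ^ m) + diff (l+1) t / fact (l+1) * (X - 0) ^ (l+1)"
      by blast
    have d0: "diff 0 X = dd vs (joint K) (x, y)" unfolding diff_def vsj_def using xy by simp
    have dm: "diff m 0 = dd (vsj m) (joint K) (x, y0)" for m unfolding diff_def by simp
    have "dd vs (joint K) (x, y) - (\<Sum>j\<le>l. dd (vsj j) (joint K) (x, y0) * X ^ j / fact j)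
        = diff (l+1) t / fact (l+1) * X ^ (l+1)"
      using t d0 dm by (simp add: lessThan_Suc_atMost)
    also have "\<bar>\<dots>\<bar> \<le> Bd * h ^ (l+1)"
    proof -
      have "set (vsj (l+1)) \<subseteq> basis_dirs \<and> length (vsj (l+1)) \<le> L"
        using svsj lvsj Cons.prems(3) by simp
      then have b1: "\<bar>diff (l+1) t\<bar> \<le> Bd" unfolding diff_def
        using Bd by blast
      have b2: "\<bar>X ^ (l+1)\<bar> \<le> h ^ (l+1)" using hX by (metis abs_ge_zero power_abs power_mono)
      have b3: "1 \<le> (fact (l+1) :: real)" by (rule fact_ge_1)
      have "\<bar>diff (l+1) t / fact (l+1) * X ^ (l+1)\<bar> = \<bar>diff (l+1) t\<bar> * \<bar>X ^ (l+1)\<bar> / fact (l+1)"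
        by (simp add: abs_mult)
      also have "\<dots> \<le> \<bar>diff (l+1) t\<bar> * \<bar>X ^ (l+1)\<bar>"
        using b3 by (intro div_le_self_real) auto
      also have "\<dots> \<le> Bd * h ^ (l+1)" using b1 b2 by (intro mult_mono) auto
      finally show ?thesis .
    qed
    finally show ?thesis .
  qed
  have ih: "\<bar>dd (vsj j) (joint K) (x, y0) - T K l is (vsj j) c x y0\<bar> \<le> E" if "j \<le> l" for j
    unfolding E_def
  proof (rule Cons.IH)
    show "distinct is" using Cons.prems(1) by simp
    show "set (vsj j) \<subseteq> basis_dirs" by (rule svsj)
    show "length (vsj j) + (l + 1) * length is \<le> L" using Cons.prems(3) that lvsj by simp
    show "\<forall>k. k \<notin> set is \<longrightarrow> y0 $ k = c $ k" using Cons.prems(4) unfolding y0_def by auto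
    show "\<forall>k. \<bar>y0 $ k - c $ k\<bar> \<le> h" using Cons.prems(5) h unfolding y0_def by auto
  qed
  have aj: "\<bar>X ^ j / fact j\<bar> \<le> 1" for j
  proof -
    have "\<bar>X ^ j / fact j\<bar> = \<bar>X ^ j\<bar> / fact j" by simp
    also have "\<dots> \<le> \<bar>X ^ j\<bar>" by (rule div_le_self_real) auto
    also have "\<bar>X ^ j\<bar> \<le> 1" using hX h by (simp add: power_abs power_le_one)
    finally show ?thesis .
  qed
  have sb: "\<bar>(\<Sum>j\<le>l. (dd (vsj j) (joint K) (x, y0) - T K l is (vsj j) c x y0) * (X ^ j / fact j))\<bar>
      \<le> (\<Sum>j\<le>l. E)"
  proof -
    have "\<bar>(\<Sum>j\<le>l. (dd (vsj j) (joint K) (x, y0) - T K l is (vsj j) c x y0) * (X ^ j / fact j))\<bar>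
       \<le> (\<Sum>j\<le>l. \<bar>(dd (vsj j) (joint K) (x, y0) - T K l is (vsj j) c x y0) * (X ^ j / fact j)\<bar>)"
      by (rule sum_abs)
    also have "\<dots> \<le> (\<Sum>j\<le>l. E)"
    proof (rule sum_mono)
      fix j assume "j \<in> {..l}"
      then have jl: "j \<le> l" by (simp only: atMost_iff)
      have "\<bar>dd (vsj j) (joint K) (x, y0) - T K l is (vsj j) c x y0\<bar> \<le> E" by (rule ih[OF jl])
      then show "\<bar>(dd (vsj j) (joint K) (x, y0) - T K l is (vsj j) c x y0) * (X ^ j / fact j)\<bar> \<le> E"
        unfolding abs_mult using aj[of j] mult_mono[of _ E _ 1] by (smt (verit) abs_ge_zero)
    qed
    finally show ?thesis .
  qed
  have Tc: "T K l (i # is) vs c x y = (\<Sum>j\<le>l. T K l is (vsj j) c x y0 * (X ^ j / fact j))"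
    unfolding vsj_def e_def y0_def X_def by simp
  have dec: "dd vs (joint K) (x, y) - (\<Sum>j\<le>l. T K l is (vsj j) c x y0 * (X ^ j / fact j))
     = (dd vs (joint K) (x, y) - (\<Sum>j\<le>l. dd (vsj j) (joint K) (x, y0) * X ^ j / fact j))
       + (\<Sum>j\<le>l. (dd (vsj j) (joint K) (x, y0) - T K l is (vsj j) c x y0) * (X ^ j / fact j))"
    by (simp add: sum_subtractf algebra_simps)
  have sE: "(\<Sum>j\<le>l. E) = (l+1) * E" by simp
  have "\<bar>dd vs (joint K) (x, y) - T K l (i # is) vs c x y\<bar> \<le> Bd * h ^ (l+1) + (l+1) * E"
    unfolding Tc dec using taylor sb sE abs_triangle_ineq by (smt (verit))
  also have "\<dots> \<le> Bd * h ^ (l+1) * (l+2) ^ (length (i # is))"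
  proof -
    have "(1::real) \<le> (l+2) ^ length is" by simp
    moreover have "0 \<le> Bd * h ^ (l+1)" using Bd0 h by simp
    ultimately have "Bd * h ^ (l+1) * 1 \<le> Bd * h ^ (l+1) * (l+2) ^ length is"
      by (rule mult_left_mono)
    then have "Bd * h ^ (l+1) \<le> Bd * h ^ (l+1) * (l+2) ^ length is" by simp
    then show ?thesis unfolding E_def by (simp add: algebra_simps)
  qed
  finally show ?case .
qed
qed

fun Mono :: "'d list \<Rightarrow> real^'d \<Rightarrow> nat list \<Rightarrow> real^'d \<Rightarrow> real" where
  "Mono [] c p y = 1"
| "Mono (i # is) c p y = (y $ i - c $ i) ^ (hd p) / fact (hd p) * Mono is c (tl p) y"

fun Coef :: "(real^'d \<Rightarrow> real^'d \<Rightarrow> real) \<Rightarrow> 'd list \<Rightarrow> ((real^'d) \<times> (real^'d)) list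
    \<Rightarrow> real^'d \<Rightarrow> nat list \<Rightarrow> real^'d \<Rightarrow> real" where
  "Coef K [] vs c p x = dd vs (joint K) (x, c)"
| "Coef K (i # is) vs c p x = Coef K is (replicate (hd p) (0, axis i 1) @ vs) c (tl p) x"

definition Pset :: "nat \<Rightarrow> nat \<Rightarrow> nat list set" where
  "Pset l n = {p. set p \<subseteq> {..l} \<and> length p = n}"

lemma finite_Pset: "finite (Pset l n)"
  unfolding Pset_def by (rule finite_lists_length_eq) simp

lemma card_Pset: "card (Pset l n) = (l+1) ^ n"
  unfolding Pset_def by (simp add: card_lists_length_eq)

lemma Pset_Suc: "Pset l (Suc n) = (\<lambda>(j, p). j # p) ` ({..l} \<times> Pset l n)"
proof
  show "Pset l (Suc n) \<subseteq> (\<lambda>(j, p). j # p) ` ({..l} \<times> Pset l n)"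
  proof
    fix p assume "p \<in> Pset l (Suc n)"
    then obtain j q where "p = j # q" "j \<le> l" "q \<in> Pset l n"
      unfolding Pset_def by (cases p) auto
    then show "p \<in> (\<lambda>(j, p). j # p) ` ({..l} \<times> Pset l n)" by force
  qed
  show "(\<lambda>(j, p). j # p) ` ({..l} \<times> Pset l n) \<subseteq> Pset l (Suc n)"
    unfolding Pset_def by auto
qed

lemma sum_Pset_Suc:
  "(\<Sum>p\<in>Pset l (Suc n). f p) = (\<Sum>j\<le>l. \<Sum>q\<in>Pset l n. f (j # q))"
proof -
  have inj: "inj_on (\<lambda>(j, p). j # p) ({..l} \<times> Pset l n)" by (auto simp: inj_on_def)
  have "(\<Sum>p\<in>Pset l (Suc n). f p) = (\<Sum>x\<in>{..l} \<times> Pset l n. f ((\<lambda>(j, p). j # p) x))"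
    unfolding Pset_Suc by (rule sum.reindex[OF inj, unfolded comp_def])
  also have "\<dots> = (\<Sum>j\<le>l. \<Sum>q\<in>Pset l n. f (j # q))"
    by (subst sum.cartesian_product) (simp add: case_prod_beta)
  finally show ?thesis .
qed

lemma Mono_upd: "i \<notin> set is \<Longrightarrow> Mono is c p (upd y i v) = Mono is c p y"
  by (induction "is" arbitrary: p) auto

lemma T_expand:
  "distinct is \<Longrightarrow> T K l is vs c x y = (\<Sum>p\<in>Pset l (length is). Coef K is vs c p x * Mono is c p y)"
proof (induction "is" arbitrary: vs y)
  case Nil
  have "Pset l 0 = {[]}" unfolding Pset_def by auto
  then show ?case by simp
next
  case (Cons i "is")
  have "T K l (i # is) vs c x y = (\<Sum>j\<le>l. (\<Sum>q\<in>Pset l (length is).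
      Coef K is (replicate j (0, axis i 1) @ vs) c q x * Mono is c q (upd y i (c $ i))) * ((y $ i - c $ i) ^ j / fact j))"
    using Cons by simp
  also have "\<dots> = (\<Sum>j\<le>l. \<Sum>q\<in>Pset l (length is).
      Coef K (i # is) vs c (j # q) x * Mono (i # is) c (j # q) y)"
    using Cons.prems unfolding sum_distrib_right
    by (intro sum.cong refl) (simp add: Mono_upd)
  also have "\<dots> = (\<Sum>p\<in>Pset l (length (i # is)). Coef K (i # is) vs c p x * Mono (i # is) c p y)"
    by (simp add: sum_Pset_Suc)
  finally show ?case .
qed

lemma Mono_bound: "(\<forall>k. \<bar>y $ k - c $ k\<bar> \<le> 1) \<Longrightarrow> \<bar>Mono is c p y\<bar> \<le> 1"
proof (induction "is" arbitrary: p)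
  case Nil
  then show ?case by simp
next
  case (Cons i "is")
  have a: "\<bar>(y $ i - c $ i) ^ (hd p) / fact (hd p)\<bar> \<le> 1"
  proof -
    have "\<bar>(y $ i - c $ i) ^ (hd p) / fact (hd p)\<bar> = \<bar>(y $ i - c $ i) ^ (hd p)\<bar> / fact (hd p)" by simp
    also have "\<dots> \<le> \<bar>(y $ i - c $ i) ^ (hd p)\<bar>" by (rule div_le_self_real) auto
    also have "\<dots> \<le> 1" using Cons.prems by (simp add: power_abs power_le_one)
    finally show ?thesis .
  qed
  have b: "\<bar>Mono is c (tl p) y\<bar> \<le> 1" using Cons by blast
  show ?case using mult_mono[OF a b] by (simp add: abs_mult)
qed

lemma Mono_cont: "continuous_on UNIV (Mono is c p)"
proof (induction "is" arbitrary: p)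
  case Nil
  then show ?case by (simp add: continuous_on_const)
next
  case (Cons i "is")
  have "continuous_on UNIV (\<lambda>y. (y $ i - c $ i) ^ (hd p) / fact (hd p) * Mono is c (tl p) y)"
    by (intro continuous_intros Cons.IH) auto
  then show ?case by simp
qed

lemma abs_le_1_sq: "\<bar>x::real\<bar> \<le> 1 + x^2"
proof (cases "\<bar>x\<bar> \<le> 1")
  case True
  then show ?thesis using zero_le_power2[of x] by linarith
next
  case False
  then have "\<bar>x\<bar> * 1 \<le> \<bar>x\<bar> * \<bar>x\<bar>" by (intro mult_left_mono) auto
  then show ?thesis by (simp add: power2_eq_square)
qed

lemma abs_mult_le_sq: "\<bar>x * y::real\<bar> \<le> x^2 + y^2"
proof -
  have "2 * \<bar>x\<bar> * \<bar>y\<bar> \<le> \<bar>x\<bar>^2 + \<bar>y\<bar>^2" by (rule sum_squares_bound)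
  then have "2 * \<bar>x\<bar> * \<bar>y\<bar> \<le> x^2 + y^2" by simp
  moreover have "0 \<le> \<bar>x\<bar> * \<bar>y\<bar>" by simp
  ultimately show ?thesis unfolding abs_mult by linarith
qed

definition L2B :: "(real^'d) set \<Rightarrow> (real^'d \<Rightarrow> real) \<Rightarrow> bool" where
  "L2B B u \<longleftrightarrow> u \<in> borel_measurable lborel \<and> integrable lborel (\<lambda>y. (u y)^2) \<and> (\<forall>y. y \<notin> B \<longrightarrow> u y = 0)"

context
  fixes B :: "(real^'d) set"
  assumes Bs: "B \<in> sets lborel" and Bf: "emeasure lborel B < \<infinity>"
begin

lemma L2B_integrable:
  assumes "L2B B u"
  shows "integrable lborel u"
proof (rule Bochner_Integration.integrable_bound[where M=lborel and f="\<lambda>y. indicator B y + (u y)^2 :: real"])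
  show "integrable lborel (\<lambda>y. indicator B y + (u y)^2 :: real)"
    using assms Bs Bf unfolding L2B_def by (intro Bochner_Integration.integrable_add integrable_real_indicator) auto
  show "u \<in> borel_measurable lborel" using assms unfolding L2B_def by auto
  show "AE y in lborel. norm (u y) \<le> norm (indicator B y + (u y)^2 :: real)"
  proof (rule AE_I2)
    fix y
    show "norm (u y) \<le> norm (indicator B y + (u y)^2 :: real)"
    proof (cases "y \<in> B")
      case True
      then show ?thesis using abs_le_1_sq[of "u y"] by simp
    next
      case False
      then show ?thesis using assms unfolding L2B_def by simp
    qed
  qed
qed

lemma L2B_abs_integrable:
  assumes "L2B B u"
  shows "integrable lborel (\<lambda>y. \<bar>u y\<bar>)"
  using L2B_integrable[OF assms] by simp

lemma L2B_prod_integrable: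
  assumes "L2B B u" "L2B B v"
  shows "integrable lborel (\<lambda>y. u y * v y)"
proof (rule Bochner_Integration.integrable_bound[where M=lborel and f="\<lambda>y. (u y)^2 + (v y)^2 :: real"])
  show "integrable lborel (\<lambda>y. (u y)^2 + (v y)^2)"
    using assms unfolding L2B_def by auto
  show "(\<lambda>y. u y * v y) \<in> borel_measurable lborel" using assms unfolding L2B_def by auto
  show "AE y in lborel. norm (u y * v y) \<le> norm ((u y)^2 + (v y)^2)"
    using abs_mult_le_sq by (intro AE_I2) auto
qed

lemma L2B_bounded_mult_integrable:
  assumes "L2B B u" "b \<in> borel_measurable lborel" "\<And>y. y \<in> B \<Longrightarrow> \<bar>b y\<bar> \<le> C"
  shows "integrable lborel (\<lambda>y. b y * u y)"
proof (rule Bochner_Integration.integrable_bound[where M=lborel and f="\<lambda>y. \<bar>C\<bar> * \<bar>u y\<bar> :: real"])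
  show "integrable lborel (\<lambda>y. \<bar>C\<bar> * \<bar>u y\<bar>)" using L2B_abs_integrable[OF assms(1)] by simp
  show "(\<lambda>y. b y * u y) \<in> borel_measurable lborel" using assms unfolding L2B_def by auto
  show "AE y in lborel. norm (b y * u y) \<le> norm (\<bar>C\<bar> * \<bar>u y\<bar>)"
  proof (rule AE_I2)
    fix y
    show "norm (b y * u y) \<le> norm (\<bar>C\<bar> * \<bar>u y\<bar>)"
    proof (cases "y \<in> B")
      case True
      then have "\<bar>b y\<bar> \<le> \<bar>C\<bar>" using assms(3)[of y] by linarith
      then have "\<bar>b y\<bar> * \<bar>u y\<bar> \<le> \<bar>C\<bar> * \<bar>u y\<bar>" by (intro mult_right_mono) auto
      then show ?thesis by (simp add: abs_mult)
    next
      case False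
      then show ?thesis using assms unfolding L2B_def by simp
    qed
  qed
qed

lemma L2B_lincomb:
  assumes "finite I" "\<And>i. i \<in> I \<Longrightarrow> L2B B (u i)"
  shows "L2B B (\<lambda>y. \<Sum>i\<in>I. c i * u i y)"
  unfolding L2B_def
proof (intro conjI)
  show "(\<lambda>y. \<Sum>i\<in>I. c i * u i y) \<in> borel_measurable lborel"
    using assms unfolding L2B_def by (intro borel_measurable_sum borel_measurable_times borel_measurable_const) auto
  have "(\<lambda>y. (\<Sum>i\<in>I. c i * u i y)^2) = (\<lambda>y. \<Sum>i\<in>I. \<Sum>j\<in>I. c i * c j * (u i y * u j y))"
    by (auto simp: power2_eq_square sum_product algebra_simps)
  moreover have "integrable lborel (\<lambda>y. \<Sum>i\<in>I. \<Sum>j\<in>I. c i * c j * (u i y * u j y))"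
    using assms by (intro Bochner_Integration.integrable_sum Bochner_Integration.integrable_mult_right L2B_prod_integrable) auto
  ultimately show "integrable lborel (\<lambda>y. (\<Sum>i\<in>I. c i * u i y)^2)" by simp
  show "\<forall>y. y \<notin> B \<longrightarrow> (\<Sum>i\<in>I. c i * u i y) = 0" using assms unfolding L2B_def by auto
qed

end

lemma LA:
  fixes A :: "'j \<Rightarrow> nat \<Rightarrow> real"
  shows "finite J \<Longrightarrow> card J < k \<Longrightarrow> \<exists>c. (\<exists>i<k. c i \<noteq> 0) \<and> (\<forall>j\<in>J. (\<Sum>i<k. A j i * c i) = 0)"
proof (induction k arbitrary: J A)
  case 0
  then show ?case by simp
next
  case (Suc k)
  show ?case
  proof (cases "\<forall>j\<in>J. A j k = 0")
    case True
    define c where "c i = (if i = k then 1 else (0::real))" for i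
    have "(\<Sum>i<Suc k. A j i * c i) = 0" if "j \<in> J" for j
      using True that by (simp add: c_def)
    moreover have "c k \<noteq> 0" by (simp add: c_def)
    ultimately show ?thesis by blast
  next
    case False
    then obtain j0 where j0: "j0 \<in> J" "A j0 k \<noteq> 0" by blast
    define J' where "J' = J - {j0}"
    have fJ': "finite J'" using Suc.prems unfolding J'_def by simp
    have "card J > 0" using Suc.prems j0 card_gt_0_iff by blast
    then have cJ': "card J' < k" using Suc.prems j0 unfolding J'_def by (simp add: card_Diff_singleton)
    define A' where "A' j i = A j i - A j k * A j0 i / A j0 k" for j i
    obtain c' where c': "\<exists>i<k. c' i \<noteq> 0" "\<forall>j\<in>J'. (\<Sum>i<k. A' j i * c' i) = 0"
      using Suc.IH[OF fJ' cJ', of A'] by blast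
    define S0 where "S0 = (\<Sum>i<k. A j0 i * c' i)"
    define c where "c i = (if i < k then c' i else if i = k then - S0 / A j0 k else 0)" for i
    have sumc: "(\<Sum>i<Suc k. A j i * c i) = (\<Sum>i<k. A j i * c' i) - A j k * S0 / A j0 k" for j
      by (simp add: c_def)
    have "(\<Sum>i<Suc k. A j i * c i) = 0" if "j \<in> J" for j
    proof (cases "j = j0")
      case True
      then show ?thesis using sumc[of j] j0 by (simp add: S0_def)
    next
      case False
      then have "j \<in> J'" using that unfolding J'_def by simp
      then have "(\<Sum>i<k. A' j i * c' i) = 0" using c' by blast
      moreover have "(\<Sum>i<k. A' j i * c' i) = (\<Sum>i<k. A j i * c' i) - A j k * S0 / A j0 k"
        unfolding A'_def S0_def by (simp add: sum_subtractf sum_distrib_left sum_divide_distrib algebra_simps)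
      ultimately show ?thesis using sumc[of j] by simp
    qed
    moreover have "\<exists>i<Suc k. c i \<noteq> 0" using c' by (auto simp: c_def)
    ultimately show ?thesis by blast
  qed
qed

lemma meas_pair_cont:
  fixes k :: "(real^'d) \<times> (real^'d) \<Rightarrow> real"
  assumes "continuous_on UNIV k"
  shows "k \<in> borel_measurable (lborel \<Otimes>\<^sub>M lborel)"
  unfolding lborel_prod measurable_lborel2 using assms by (rule borel_measurable_continuous_onI)

definition kvs :: "('d \<Rightarrow> nat) \<Rightarrow> ('d \<Rightarrow> nat) \<Rightarrow> ((real^'d) \<times> (real^'d)) list" where
  "kvs \<alpha> \<beta> = map (\<lambda>i. (axis i 1, 0)) (coord_list \<alpha>) @ map (\<lambda>i. (0, axis i 1)) (coord_list \<beta>)"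

lemma Kab_kvs: "Kab K \<alpha> \<beta> x y = dd (kvs \<alpha> \<beta>) (joint K) (x, y)"
  unfolding Kab_def kvs_def by simp

lemma kvs_basis: "set (kvs \<alpha> \<beta>) \<subseteq> basis_dirs"
  unfolding kvs_def by auto

context
  fixes K :: "real^'d \<Rightarrow> real^'d \<Rightarrow> real"
  assumes CK: "Cinf_b K"
begin

lemma Kab_meas: "(\<lambda>(x, y). Kab K \<alpha> \<beta> x y) \<in> borel_measurable (lborel \<Otimes>\<^sub>M lborel)"
proof -
  have "(\<lambda>(x, y). Kab K \<alpha> \<beta> x y) = dd (kvs \<alpha> \<beta>) (joint K)"
    by (auto simp: Kab_kvs)
  then show ?thesis using meas_pair_cont[OF Cb_cont[OF CK kvs_basis]] by simp
qed

lemma Kab_meas_y: "(\<lambda>y. Kab K \<alpha> \<beta> x y) \<in> borel_measurable lborel"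
proof -
  have "continuous_on UNIV (\<lambda>y. dd (kvs \<alpha> \<beta>) (joint K) (x, y))"
    by (rule continuous_on_compose2[OF Cb_cont[OF CK kvs_basis]]) (auto intro!: continuous_intros)
  then show ?thesis unfolding Kab_kvs measurable_lborel2 by (rule borel_measurable_continuous_onI)
qed

lemma Kab_bound: "\<exists>C. \<forall>x y. \<bar>Kab K \<alpha> \<beta> x y\<bar> \<le> C"
proof -
  have "bounded (range (dd (kvs \<alpha> \<beta>) (joint K)))" by (rule Cb_bounded[OF CK kvs_basis])
  then obtain C where "\<forall>z\<in>range (dd (kvs \<alpha> \<beta>) (joint K)). norm z \<le> C" unfolding bounded_iff by blast
  then show ?thesis unfolding Kab_kvs by auto
qed

end

context
  fixes B :: "(real^'d) set"
  assumes Bs: "B \<in> sets lborel" and Bf: "emeasure lborel B < \<infinity>"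
begin

lemma prod_abs_integrable:
  assumes u: "L2B B u" and v: "L2B B v"
  shows "integrable (lborel \<Otimes>\<^sub>M lborel) (\<lambda>(x, y). \<bar>v x\<bar> * \<bar>u y\<bar>)"
proof (rule lborel_pair.Fubini_integrable)
  have [measurable]: "u \<in> borel_measurable lborel" "v \<in> borel_measurable lborel"
    using u v unfolding L2B_def by auto
  show "(\<lambda>(x, y). \<bar>v x\<bar> * \<bar>u y\<bar>) \<in> borel_measurable (lborel \<Otimes>\<^sub>M lborel)"
    by measurable
  have "(\<lambda>x. \<integral>y. norm (case (x, y) of (x, y) \<Rightarrow> \<bar>v x\<bar> * \<bar>u y\<bar>) \<partial>lborel) = (\<lambda>x. \<bar>v x\<bar> * (\<integral>y. \<bar>u y\<bar> \<partial>lborel))"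
    by (simp add: abs_mult)
  moreover have "integrable lborel (\<lambda>x. \<bar>v x\<bar> * (\<integral>y. \<bar>u y\<bar> \<partial>lborel))"
    using L2B_abs_integrable[OF Bs Bf v] by simp
  ultimately show "integrable lborel (\<lambda>x. \<integral>y. norm (case (x, y) of (x, y) \<Rightarrow> \<bar>v x\<bar> * \<bar>u y\<bar>) \<partial>lborel)"
    by simp
  show "AE x in lborel. integrable lborel (\<lambda>y. case (x, y) of (x, y) \<Rightarrow> \<bar>v x\<bar> * \<bar>u y\<bar>)"
    using L2B_abs_integrable[OF Bs Bf u] by simp
qed

lemma FUB:
  fixes k :: "real^'d \<Rightarrow> real^'d \<Rightarrow> real"
  assumes km: "(\<lambda>(x, y). k x y) \<in> borel_measurable (lborel \<Otimes>\<^sub>M lborel)"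
    and kb: "\<And>x y. \<bar>k x y\<bar> \<le> C"
    and u: "L2B B u" and v: "L2B B v"
  shows "(\<integral>x. (\<integral>y. k x y * u y \<partial>lborel) * v x \<partial>lborel) = (\<integral>y. u y * (\<integral>x. k x y * v x \<partial>lborel) \<partial>lborel)"
proof -
  have [measurable]: "u \<in> borel_measurable lborel" "v \<in> borel_measurable lborel"
    using u v unfolding L2B_def by auto
  note km[measurable]
  define H where "H x y = v x * (k x y * u y)" for x y
  have Hi: "integrable (lborel \<Otimes>\<^sub>M lborel) (\<lambda>(x, y). H x y)"
  proof (rule Bochner_Integration.integrable_bound[where f="\<lambda>(x, y). \<bar>C\<bar> * (\<bar>v x\<bar> * \<bar>u y\<bar>)"])
    show "integrable (lborel \<Otimes>\<^sub>M lborel) (\<lambda>(x, y). \<bar>C\<bar> * (\<bar>v x\<bar> * \<bar>u y\<bar>))"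
    proof -
      have eq: "(\<lambda>(x, y). \<bar>C\<bar> * (\<bar>v x\<bar> * \<bar>u y\<bar>)) = (\<lambda>z. \<bar>C\<bar> * (\<lambda>(x, y). \<bar>v x\<bar> * \<bar>u y\<bar>) z)"
        by auto
      show ?thesis unfolding eq
        by (rule Bochner_Integration.integrable_mult_right) (rule prod_abs_integrable[OF u v])
    qed
    show "(\<lambda>(x, y). H x y) \<in> borel_measurable (lborel \<Otimes>\<^sub>M lborel)"
      unfolding H_def by measurable
    show "AE z in lborel \<Otimes>\<^sub>M lborel. norm (case z of (x, y) \<Rightarrow> H x y) \<le> norm (case z of (x, y) \<Rightarrow> \<bar>C\<bar> * (\<bar>v x\<bar> * \<bar>u y\<bar>))"
    proof (rule AE_I2, clarsimp simp: H_def abs_mult)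
      fix x y
      have "\<bar>k x y\<bar> \<le> \<bar>C\<bar>" using kb[of x y] by linarith
      then have "\<bar>k x y\<bar> * (\<bar>v x\<bar> * \<bar>u y\<bar>) \<le> \<bar>C\<bar> * (\<bar>v x\<bar> * \<bar>u y\<bar>)" by (intro mult_right_mono) auto
      then show "\<bar>v x\<bar> * (\<bar>k x y\<bar> * \<bar>u y\<bar>) \<le> \<bar>C\<bar> * (\<bar>v x\<bar> * \<bar>u y\<bar>)" by (simp add: algebra_simps)
    qed
  qed
  have F: "(\<integral>y. (\<integral>x. H x y \<partial>lborel) \<partial>lborel) = (\<integral>x. (\<integral>y. H x y \<partial>lborel) \<partial>lborel)"
    by (rule lborel_pair.Fubini_integral[OF Hi])
  have l: "(\<integral>y. H x y \<partial>lborel) = (\<integral>y. k x y * u y \<partial>lborel) * v x" for x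
    unfolding H_def by (simp add: mult.commute)
  have r: "(\<integral>x. H x y \<partial>lborel) = u y * (\<integral>x. k x y * v x \<partial>lborel)" for y
  proof -
    have "(\<integral>x. H x y \<partial>lborel) = (\<integral>x. u y * (k x y * v x) \<partial>lborel)"
      unfolding H_def by (simp add: algebra_simps)
    then show ?thesis by simp
  qed
  show ?thesis using F unfolding l r by simp
qed

end

lemma finite_S: "finite (S M :: ('d::finite \<Rightarrow> nat) set)"
proof (rule finite_subset)
  show "S M \<subseteq> (\<Pi>\<^sub>E i\<in>(UNIV::'d set). {..M})"
  proof
    fix \<alpha> :: "'d \<Rightarrow> nat" assume "\<alpha> \<in> S M"
    then have "\<alpha> i \<le> M" for i
      unfolding S_def using member_le_sum[of i UNIV \<alpha>] by auto
    then show "\<alpha> \<in> (\<Pi>\<^sub>E i\<in>(UNIV::'d set). {..M})" by auto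
  qed
  show "finite (\<Pi>\<^sub>E i\<in>(UNIV::'d set). {..M})" by (rule finite_PiE) auto
qed

lemma zero_in_S: "(\<lambda>_. 0) \<in> S M"
  unfolding S_def by simp

definition KopB :: "(real^'d \<Rightarrow> real^'d \<Rightarrow> real) \<Rightarrow> nat \<Rightarrow> (('d \<Rightarrow> nat) \<Rightarrow> real^'d \<Rightarrow> real)
    \<Rightarrow> real^'d \<Rightarrow> ('d \<Rightarrow> nat) \<Rightarrow> real" where
  "KopB K M u x \<alpha> = (\<Sum>\<beta>\<in>S M. \<integral>y. Kab K \<alpha> \<beta> x y * u \<beta> y \<partial>lborel)"

lemma Kop_KopB: "Kop K M R f x \<alpha> = KopB K M (\<lambda>\<beta> y. indicator (ball 0 R) y * f y \<beta>) x \<alpha>"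
  unfolding Kop_def KopB_def set_lebesgue_integral_def
  by (intro sum.cong refl arg_cong[where f="integral\<^sup>L lborel"] ext) (simp add: algebra_simps)

context
  fixes K :: "real^'d \<Rightarrow> real^'d \<Rightarrow> real"
  assumes CK: "Cinf_b K"
begin

lemma Iab_meas:
  assumes [measurable]: "u \<in> borel_measurable lborel"
  shows "(\<lambda>x. \<integral>y. Kab K \<alpha> \<beta> x y * u y \<partial>lborel) \<in> borel_measurable lborel"
proof (rule lborel.borel_measurable_lebesgue_integral)
  note Kab_meas[OF CK, measurable]
  show "(\<lambda>(x, y). Kab K \<alpha> \<beta> x y * u y) \<in> borel_measurable (lborel \<Otimes>\<^sub>M lborel)"
    by measurable
qed

lemma KopB_meas:
  assumes "\<And>\<beta>. \<beta> \<in> S M \<Longrightarrow> u \<beta> \<in> borel_measurable lborel"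
  shows "(\<lambda>x. KopB K M u x \<alpha>) \<in> borel_measurable lborel"
  unfolding KopB_def using assms Iab_meas by (intro borel_measurable_sum) auto

context
  fixes B :: "(real^'d) set"
  assumes Bs: "B \<in> sets lborel" and Bf: "emeasure lborel B < \<infinity>"
begin

lemma Kab_u_integrable:
  assumes "L2B B u"
  shows "integrable lborel (\<lambda>y. Kab K \<alpha> \<beta> x y * u y)"
proof -
  obtain C where C: "\<forall>x y. \<bar>Kab K \<alpha> \<beta> x y\<bar> \<le> C" using Kab_bound[OF CK] by blast
  show ?thesis
    by (rule L2B_bounded_mult_integrable[OF Bs Bf assms Kab_meas_y[OF CK]]) (use C in blast)
qed

lemma Iab_bound:
  assumes "L2B B u"
  shows "\<exists>C. \<forall>x. \<bar>\<integral>y. Kab K \<alpha> \<beta> x y * u y \<partial>lborel\<bar> \<le> C"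
proof -
  obtain C where C: "\<forall>x y. \<bar>Kab K \<alpha> \<beta> x y\<bar> \<le> C" using Kab_bound[OF CK] by blast
  have "\<bar>\<integral>y. Kab K \<alpha> \<beta> x y * u y \<partial>lborel\<bar> \<le> (\<integral>y. \<bar>C\<bar> * \<bar>u y\<bar> \<partial>lborel)" for x
  proof (rule integral_abs_bound_integral)
    show "integrable lborel (\<lambda>y. Kab K \<alpha> \<beta> x y * u y)" by (rule Kab_u_integrable[OF assms])
    show "integrable lborel (\<lambda>y. \<bar>C\<bar> * \<bar>u y\<bar>)" using L2B_abs_integrable[OF Bs Bf assms] by simp
    fix y
    have "\<bar>Kab K \<alpha> \<beta> x y\<bar> \<le> \<bar>C\<bar>" using C by (meson abs_ge_self order_trans)
    then show "\<bar>Kab K \<alpha> \<beta> x y * u y\<bar> \<le> \<bar>C\<bar> * \<bar>u y\<bar>"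
      unfolding abs_mult by (intro mult_right_mono) auto
  qed
  then show ?thesis by blast
qed

lemma Iab_v_integrable:
  assumes "L2B B u" "L2B B v"
  shows "integrable lborel (\<lambda>x. (\<integral>y. Kab K \<alpha> \<beta> x y * u y \<partial>lborel) * v x)"
proof -
  obtain C where C: "\<forall>x. \<bar>\<integral>y. Kab K \<alpha> \<beta> x y * u y \<partial>lborel\<bar> \<le> C" using Iab_bound[OF assms(1)] by blast
  have "u \<in> borel_measurable lborel" using assms unfolding L2B_def by auto
  then show ?thesis
    by (rule L2B_bounded_mult_integrable[OF Bs Bf assms(2) Iab_meas]) (use C in blast)
qed

lemma KopB_lin:
  assumes "finite I" "\<And>i \<beta>. i \<in> I \<Longrightarrow> \<beta> \<in> S M \<Longrightarrow> L2B B (u i \<beta>)"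
  shows "KopB K M (\<lambda>\<beta> y. \<Sum>i\<in>I. c i * u i \<beta> y) x \<alpha> = (\<Sum>i\<in>I. c i * KopB K M (u i) x \<alpha>)"
proof -
  have "KopB K M (\<lambda>\<beta> y. \<Sum>i\<in>I. c i * u i \<beta> y) x \<alpha>
      = (\<Sum>\<beta>\<in>S M. \<integral>y. (\<Sum>i\<in>I. c i * (Kab K \<alpha> \<beta> x y * u i \<beta> y)) \<partial>lborel)"
    unfolding KopB_def by (simp add: sum_distrib_left algebra_simps)
  also have "\<dots> = (\<Sum>\<beta>\<in>S M. \<Sum>i\<in>I. c i * (\<integral>y. Kab K \<alpha> \<beta> x y * u i \<beta> y \<partial>lborel))"
  proof (rule sum.cong[OF refl])
    fix \<beta> :: "'d \<Rightarrow> nat" assume "\<beta> \<in> S M"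
    then show "(\<integral>y. (\<Sum>i\<in>I. c i * (Kab K \<alpha> \<beta> x y * u i \<beta> y)) \<partial>lborel)
        = (\<Sum>i\<in>I. c i * (\<integral>y. Kab K \<alpha> \<beta> x y * u i \<beta> y \<partial>lborel))"
      using assms Kab_u_integrable by (subst Bochner_Integration.integral_sum) auto
  qed
  also have "\<dots> = (\<Sum>i\<in>I. c i * KopB K M (u i) x \<alpha>)"
    unfolding KopB_def by (subst sum.swap) (simp add: sum_distrib_left)
  finally show ?thesis .
qed

lemma SYM:
  assumes cov: "covariance_kernel K"
    and u: "\<And>\<beta>. \<beta> \<in> S M \<Longrightarrow> L2B B (u \<beta>)" and v: "\<And>\<beta>. \<beta> \<in> S M \<Longrightarrow> L2B B (v \<beta>)"
  shows "(\<Sum>\<alpha>\<in>S M. \<integral>x. KopB K M u x \<alpha> * v \<alpha> x \<partial>lborel) = (\<Sum>\<alpha>\<in>S M. \<integral>x. u \<alpha> x * KopB K M v x \<alpha> \<partial>lborel)"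
proof -
  have "(\<Sum>\<alpha>\<in>S M. \<integral>x. KopB K M u x \<alpha> * v \<alpha> x \<partial>lborel)
      = (\<Sum>\<alpha>\<in>S M. \<Sum>\<beta>\<in>S M. \<integral>x. (\<integral>y. Kab K \<alpha> \<beta> x y * u \<beta> y \<partial>lborel) * v \<alpha> x \<partial>lborel)"
  proof (rule sum.cong[OF refl])
    fix \<alpha> :: "'d \<Rightarrow> nat" assume a: "\<alpha> \<in> S M"
    show "(\<integral>x. KopB K M u x \<alpha> * v \<alpha> x \<partial>lborel) = (\<Sum>\<beta>\<in>S M. \<integral>x. (\<integral>y. Kab K \<alpha> \<beta> x y * u \<beta> y \<partial>lborel) * v \<alpha> x \<partial>lborel)"
      unfolding KopB_def sum_distrib_right
      using Iab_v_integrable u v a by (subst Bochner_Integration.integral_sum) auto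
  qed
  also have "\<dots> = (\<Sum>\<alpha>\<in>S M. \<Sum>\<beta>\<in>S M. \<integral>y. u \<beta> y * (\<integral>x. Kab K \<alpha> \<beta> x y * v \<alpha> x \<partial>lborel) \<partial>lborel)"
  proof (intro sum.cong refl)
    fix \<alpha> \<beta> :: "'d \<Rightarrow> nat" assume a: "\<alpha> \<in> S M" and b: "\<beta> \<in> S M"
    obtain C where C: "\<forall>x y. \<bar>Kab K \<alpha> \<beta> x y\<bar> \<le> C" using Kab_bound[OF CK] by blast
    show "(\<integral>x. (\<integral>y. Kab K \<alpha> \<beta> x y * u \<beta> y \<partial>lborel) * v \<alpha> x \<partial>lborel)
        = (\<integral>y. u \<beta> y * (\<integral>x. Kab K \<alpha> \<beta> x y * v \<alpha> x \<partial>lborel) \<partial>lborel)"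
      by (rule FUB[OF Bs Bf Kab_meas[OF CK]]) (use C u[OF b] v[OF a] in auto)
  qed
  also have "\<dots> = (\<Sum>\<beta>\<in>S M. \<Sum>\<alpha>\<in>S M. \<integral>y. u \<beta> y * (\<integral>x. Kab K \<beta> \<alpha> y x * v \<alpha> x \<partial>lborel) \<partial>lborel)"
    by (subst sum.swap) (simp add: Kab_sym[OF cov CK])
  also have "\<dots> = (\<Sum>\<beta>\<in>S M. \<integral>y. u \<beta> y * KopB K M v y \<beta> \<partial>lborel)"
  proof (rule sum.cong[OF refl])
    fix \<beta> :: "'d \<Rightarrow> nat" assume b: "\<beta> \<in> S M"
    have "(\<integral>y. u \<beta> y * KopB K M v y \<beta> \<partial>lborel) = (\<integral>y. (\<Sum>\<alpha>\<in>S M. (\<integral>x. Kab K \<beta> \<alpha> y x * v \<alpha> x \<partial>lborel) * u \<beta> y) \<partial>lborel)"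
      unfolding KopB_def by (simp add: sum_distrib_left mult.commute)
    also have "\<dots> = (\<Sum>\<alpha>\<in>S M. \<integral>y. (\<integral>x. Kab K \<beta> \<alpha> y x * v \<alpha> x \<partial>lborel) * u \<beta> y \<partial>lborel)"
      using Iab_v_integrable u v b by (subst Bochner_Integration.integral_sum) auto
    finally show "(\<Sum>\<alpha>\<in>S M. \<integral>y. u \<beta> y * (\<integral>x. Kab K \<beta> \<alpha> y x * v \<alpha> x \<partial>lborel) \<partial>lborel)
        = (\<integral>y. u \<beta> y * KopB K M v y \<beta> \<partial>lborel)"
      by (simp add: mult.commute)
  qed
  finally show ?thesis .
qed

end

end

lemma CS_int:
  fixes B :: "(real^'d) set"
  assumes Bs: "B \<in> sets lborel" and Bf: "emeasure lborel B < \<infinity>"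
    and Vp: "measure lborel B > 0" and u: "L2B B u"
  shows "(\<integral>y. \<bar>u y\<bar> \<partial>lborel)^2 \<le> measure lborel B * (\<integral>y. (u y)^2 \<partial>lborel)"
proof -
  define P where "P = (\<integral>y. \<bar>u y\<bar> \<partial>lborel)"
  define Q where "Q = (\<integral>y. (u y)^2 \<partial>lborel)"
  define V where "V = measure lborel B"
  have ui: "integrable lborel (\<lambda>y. \<bar>u y\<bar>)" by (rule L2B_abs_integrable[OF Bs Bf u])
  have u2: "integrable lborel (\<lambda>y. (u y)^2)" using u unfolding L2B_def by auto
  have ind: "integrable lborel (indicator B :: real^'d \<Rightarrow> real)" using Bs Bf by simp
  have vanish: "\<And>y. y \<notin> B \<Longrightarrow> u y = 0" using u unfolding L2B_def by auto
  have key: "0 \<le> Q - 2 * a * P + a^2 * V" for a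
  proof -
    have eq: "(\<lambda>y. (\<bar>u y\<bar> - a * indicator B y)^2) = (\<lambda>y. (u y)^2 - 2 * a * \<bar>u y\<bar> + a^2 * indicator B y)"
    proof
      fix y
      show "(\<bar>u y\<bar> - a * indicator B y)^2 = (u y)^2 - 2 * a * \<bar>u y\<bar> + a^2 * indicator B y"
        by (cases "y \<in> B") (auto simp: vanish power2_eq_square algebra_simps)
    qed
    have "0 \<le> (\<integral>y. (\<bar>u y\<bar> - a * indicator B y)^2 \<partial>lborel)" by simp
    also have "\<dots> = (\<integral>y. (u y)^2 - 2 * a * \<bar>u y\<bar> + a^2 * indicator B y \<partial>lborel)" unfolding eq ..
    also have "\<dots> = Q - 2 * a * P + a^2 * V"
      using ui u2 ind Bs unfolding P_def Q_def V_def by (simp add: Bochner_Integration.integral_add Bochner_Integration.integral_diff)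
    finally show ?thesis .
  qed
  have V: "V > 0" using Vp unfolding V_def .
  have "0 \<le> Q - 2 * (P / V) * P + (P / V)^2 * V" by (rule key)
  also have "\<dots> = Q - P^2 / V" using V by (simp add: power2_eq_square field_simps)
  finally have "P^2 / V \<le> Q" by simp
  then have "P^2 \<le> V * Q" using V by (simp add: divide_le_eq mult.commute)
  then show ?thesis unfolding P_def Q_def V_def .
qed

lemma CORE:
  fixes K :: "real^'d \<Rightarrow> real^'d \<Rightarrow> real" and M k :: nat and R t e0 Cb :: real
    and J :: "'j set" and a :: "('d \<Rightarrow> nat) \<Rightarrow> ('d \<Rightarrow> nat) \<Rightarrow> 'j \<Rightarrow> real^'d \<Rightarrow> real"
    and b :: "'j \<Rightarrow> real^'d \<Rightarrow> real"
    and fs :: "nat \<Rightarrow> real^'d \<Rightarrow> ('d \<Rightarrow> nat) \<Rightarrow> real" and mus :: "nat \<Rightarrow> real"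
  assumes cov: "covariance_kernel K" and CK: "Cinf_b K" and R: "R > 0"
    and fJ: "finite J" and bm: "\<And>j. b j \<in> borel_measurable lborel" and bb: "\<And>j y. \<bar>b j y\<bar> \<le> Cb"
    and err: "\<And>\<alpha> \<beta> x y. \<alpha> \<in> S M \<Longrightarrow> \<beta> \<in> S M \<Longrightarrow> x \<in> ball 0 R \<Longrightarrow> y \<in> ball 0 R \<Longrightarrow>
        \<bar>Kab K \<alpha> \<beta> x y - (\<Sum>j\<in>J. a \<alpha> \<beta> j x * b j y)\<bar> \<le> e0"
    and e0: "e0 \<ge> 0"
    and tbig: "t > e0 * measure lborel (ball (0::real^'d) R) * card (S M :: ('d \<Rightarrow> nat) set)"
    and kbig: "card (S M :: ('d \<Rightarrow> nat) set) * card J < k"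
    and eig: "\<forall>i<k. mus i > t \<and> is_eigfun K M R (mus i) (fs i)"
    and indep: "\<forall>c::nat \<Rightarrow> real. (\<forall>\<alpha>\<in>S M. AE x in lborel. x \<in> ball 0 R \<longrightarrow> (\<Sum>i<k. c i * fs i x \<alpha>) = 0)
                 \<longrightarrow> (\<forall>i<k. c i = 0)"
  shows False
proof -
  define B where "B = ball (0::real^'d) R"
  have Bs: "B \<in> sets lborel" unfolding B_def by simp
  have Bf: "emeasure lborel B < \<infinity>" unfolding B_def by (rule emeasure_bounded_finite) simp
  define V where "V = measure lborel B"
  have Vp: "V > 0" unfolding V_def B_def using content_ball_pos[OF R] by simp
  define SS where "SS = (S M :: ('d \<Rightarrow> nat) set)"
  have fS: "finite SS" unfolding SS_def by (rule finite_S)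
  define fb where "fb = (\<lambda>i \<beta> y. indicator B y * fs i y \<beta>)"
  have L2: "L2B B (fb i \<beta>)" if "i < k" "\<beta> \<in> SS" for i \<beta>
  proof -
    have "L2S M R (fs i)" using eig that unfolding is_eigfun_def by auto
    then have m: "(\<lambda>y. indicator B y * fs i y \<beta>) \<in> borel_measurable lborel"
      and s: "integrable lborel (\<lambda>y. indicator B y *\<^sub>R (fs i y \<beta>)^2)"
      using that unfolding L2S_def set_integrable_def B_def SS_def by auto
    have "(\<lambda>y. (fb i \<beta> y)^2) = (\<lambda>y. indicator B y *\<^sub>R (fs i y \<beta>)^2)"
      by (auto simp: fb_def indicator_def fun_eq_iff)
    then show ?thesis unfolding L2B_def using m s by (auto simp: fb_def)
  qed
  have eigB: "AE x in lborel. indicator B x * KopB K M (fb i) x \<alpha> = mus i * fb i \<alpha> x" if "i < k" "\<alpha> \<in> SS" for i \<alpha>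
  proof -
    have "AE x in lborel. x \<in> B \<longrightarrow> KopB K M (fb i) x \<alpha> = mus i * fs i x \<alpha>"
      using eig that unfolding is_eigfun_def Kop_KopB B_def SS_def fb_def by auto
    then show ?thesis by eventually_elim (auto simp: fb_def indicator_def)
  qed
  define A where "A = (\<lambda>(\<beta>, j) i. \<integral>y. b j y * fb i \<beta> y \<partial>lborel)"
  obtain c where c: "\<exists>i<k. c i \<noteq> 0" "\<forall>q\<in>SS \<times> J. (\<Sum>i<k. A q i * c i) = 0"
    using LA[of "SS \<times> J" k A] fS fJ kbig unfolding SS_def by (auto simp: card_cartesian_product)
  define g where "g = (\<lambda>\<beta> y. \<Sum>i<k. c i * fb i \<beta> y)"
  define h where "h = (\<lambda>\<alpha> x. \<Sum>i<k. (c i * mus i) * fb i \<alpha> x)"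
  have Lg: "L2B B (g \<beta>)" if "\<beta> \<in> SS" for \<beta>
    unfolding g_def by (rule L2B_lincomb[OF Bs Bf]) (use L2 that in auto)
  have Lh: "L2B B (h \<alpha>)" if "\<alpha> \<in> SS" for \<alpha>
    unfolding h_def by (rule L2B_lincomb[OF Bs Bf]) (use L2 that in auto)
  have bfi: "integrable lborel (\<lambda>y. b j y * fb i \<beta> y)" if "i < k" "\<beta> \<in> SS" for i \<beta> j
    by (rule L2B_bounded_mult_integrable[OF Bs Bf L2[OF that] bm]) (rule bb)
  have bgi: "integrable lborel (\<lambda>y. b j y * g \<beta> y)" if "\<beta> \<in> SS" for \<beta> j
    by (rule L2B_bounded_mult_integrable[OF Bs Bf Lg[OF that] bm]) (rule bb)
  have phi0: "(\<integral>y. b j y * g \<beta> y \<partial>lborel) = 0" if "\<beta> \<in> SS" "j \<in> J" for \<beta> j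
  proof -
    have "(\<lambda>y. b j y * g \<beta> y) = (\<lambda>y. \<Sum>i<k. c i * (b j y * fb i \<beta> y))"
      by (auto simp: g_def sum_distrib_left mult_ac)
    then have "(\<integral>y. b j y * g \<beta> y \<partial>lborel) = (\<Sum>i<k. c i * (\<integral>y. b j y * fb i \<beta> y \<partial>lborel))"
      using bfi that by (simp add: Bochner_Integration.integral_sum)
    also have "\<dots> = (\<Sum>i<k. A (\<beta>, j) i * c i)" by (simp add: A_def mult.commute)
    also have "\<dots> = 0" using c(2) that by blast
    finally show ?thesis .
  qed
  define P where "P = (\<Sum>\<beta>\<in>SS. \<integral>y. \<bar>g \<beta> y\<bar> \<partial>lborel)"
  have Kg1: "\<bar>\<integral>y. Kab K \<alpha> \<beta> x y * g \<beta> y \<partial>lborel\<bar> \<le> e0 * (\<integral>y. \<bar>g \<beta> y\<bar> \<partial>lborel)"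
    if "x \<in> B" "\<alpha> \<in> SS" "\<beta> \<in> SS" for x \<alpha> \<beta>
  proof -
    define Fb where "Fb = (\<lambda>y. \<Sum>j\<in>J. a \<alpha> \<beta> j x * b j y)"
    have i1: "integrable lborel (\<lambda>y. Kab K \<alpha> \<beta> x y * g \<beta> y)"
      by (rule Kab_u_integrable[OF CK Bs Bf Lg[OF that(3)]])
    have Fg: "(\<lambda>y. Fb y * g \<beta> y) = (\<lambda>y. \<Sum>j\<in>J. a \<alpha> \<beta> j x * (b j y * g \<beta> y))"
      unfolding Fb_def sum_distrib_right by (simp add: mult.assoc)
    have i2: "integrable lborel (\<lambda>y. Fb y * g \<beta> y)"
      unfolding Fg using bgi[OF that(3)] by auto
    have z: "(\<integral>y. Fb y * g \<beta> y \<partial>lborel) = 0"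
      unfolding Fg using bgi[OF that(3)] phi0[OF that(3)] by (simp add: Bochner_Integration.integral_sum)
    have gi: "integrable lborel (\<lambda>y. \<bar>g \<beta> y\<bar>)" by (rule L2B_abs_integrable[OF Bs Bf Lg[OF that(3)]])
    have "(\<integral>y. Kab K \<alpha> \<beta> x y * g \<beta> y \<partial>lborel) = (\<integral>y. Kab K \<alpha> \<beta> x y * g \<beta> y - Fb y * g \<beta> y \<partial>lborel)"
      using i1 i2 z by (simp add: Bochner_Integration.integral_diff)
    also have "\<bar>\<dots>\<bar> \<le> (\<integral>y. e0 * \<bar>g \<beta> y\<bar> \<partial>lborel)"
    proof (rule integral_abs_bound_integral)
      show "integrable lborel (\<lambda>y. Kab K \<alpha> \<beta> x y * g \<beta> y - Fb y * g \<beta> y)" using i1 i2 by auto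
      show "integrable lborel (\<lambda>y. e0 * \<bar>g \<beta> y\<bar>)" using gi by auto
      fix y
      show "\<bar>Kab K \<alpha> \<beta> x y * g \<beta> y - Fb y * g \<beta> y\<bar> \<le> e0 * \<bar>g \<beta> y\<bar>"
      proof (cases "y \<in> B")
        case True
        have "\<bar>Kab K \<alpha> \<beta> x y - Fb y\<bar> \<le> e0"
          unfolding Fb_def using err that True unfolding SS_def B_def by blast
        then have "\<bar>Kab K \<alpha> \<beta> x y - Fb y\<bar> * \<bar>g \<beta> y\<bar> \<le> e0 * \<bar>g \<beta> y\<bar>"
          by (intro mult_right_mono) auto
        then show ?thesis by (simp add: abs_mult left_diff_distrib[symmetric])
      next
        case False
        then have "g \<beta> y = 0" using Lg[OF that(3)] unfolding L2B_def by auto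
        then show ?thesis by simp
      qed
    qed
    also have "\<dots> = e0 * (\<integral>y. \<bar>g \<beta> y\<bar> \<partial>lborel)" by simp
    finally show ?thesis .
  qed
  have Kg: "\<bar>KopB K M g x \<alpha>\<bar> \<le> e0 * P" if "x \<in> B" "\<alpha> \<in> SS" for x \<alpha>
  proof -
    have "\<bar>KopB K M g x \<alpha>\<bar> \<le> (\<Sum>\<beta>\<in>SS. \<bar>\<integral>y. Kab K \<alpha> \<beta> x y * g \<beta> y \<partial>lborel\<bar>)"
      unfolding KopB_def SS_def by (rule sum_abs)
    also have "\<dots> \<le> (\<Sum>\<beta>\<in>SS. e0 * (\<integral>y. \<bar>g \<beta> y\<bar> \<partial>lborel))"
      by (rule sum_mono) (rule Kg1[OF that])
    also have "\<dots> = e0 * P" unfolding P_def by (simp add: sum_distrib_left)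
    finally show ?thesis .
  qed
  have hAE: "AE x in lborel. indicator B x * KopB K M g x \<alpha> = h \<alpha> x" if "\<alpha> \<in> SS" for \<alpha>
  proof -
    have "AE x in lborel. \<forall>i\<in>{..<k}. indicator B x * KopB K M (fb i) x \<alpha> = mus i * fb i \<alpha> x"
      by (rule AE_finite_allI) (use eigB that in auto)
    then show ?thesis
    proof eventually_elim
      case (elim x)
      have "KopB K M g x \<alpha> = (\<Sum>i<k. c i * KopB K M (fb i) x \<alpha>)"
        unfolding g_def by (rule KopB_lin[OF CK Bs Bf]) (use L2 in \<open>auto simp: SS_def\<close>)
      then have "indicator B x * KopB K M g x \<alpha> = (\<Sum>i<k. c i * (indicator B x * KopB K M (fb i) x \<alpha>))"
        by (simp add: sum_distrib_left mult_ac)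
      also have "\<dots> = h \<alpha> x" using elim unfolding h_def by (simp add: mult_ac)
      finally show ?case .
    qed
  qed
  define IP where "IP = (\<Sum>\<alpha>\<in>SS. \<integral>x. h \<alpha> x * g \<alpha> x \<partial>lborel)"
  have P0: "P \<ge> 0" unfolding P_def by (intro sum_nonneg integral_nonneg_AE) auto
  have IPb: "IP \<le> e0 * P^2"
  proof -
    have "(\<integral>x. h \<alpha> x * g \<alpha> x \<partial>lborel) \<le> (\<integral>x. e0 * P * \<bar>g \<alpha> x\<bar> \<partial>lborel)" if a: "\<alpha> \<in> SS" for \<alpha>
    proof (rule integral_mono_AE)
      show "integrable lborel (\<lambda>x. h \<alpha> x * g \<alpha> x)" by (rule L2B_prod_integrable[OF Bs Bf Lh[OF a] Lg[OF a]])
      show "integrable lborel (\<lambda>x. e0 * P * \<bar>g \<alpha> x\<bar>)" using L2B_abs_integrable[OF Bs Bf Lg[OF a]] by auto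
      show "AE x in lborel. h \<alpha> x * g \<alpha> x \<le> e0 * P * \<bar>g \<alpha> x\<bar>"
        using hAE[OF a]
      proof eventually_elim
        case (elim x)
        show ?case
        proof (cases "x \<in> B")
          case True
          then have "h \<alpha> x = KopB K M g x \<alpha>" using elim by simp
          then have "\<bar>h \<alpha> x\<bar> \<le> e0 * P" using Kg[OF True a] by simp
          then have "\<bar>h \<alpha> x\<bar> * \<bar>g \<alpha> x\<bar> \<le> e0 * P * \<bar>g \<alpha> x\<bar>" by (intro mult_right_mono) auto
          then show ?thesis by (metis abs_ge_self abs_mult order_trans)
        next
          case False
          then have "g \<alpha> x = 0" using Lg[OF a] unfolding L2B_def by auto
          then show ?thesis by simp
        qed
      qed
    qed
    then have "IP \<le> (\<Sum>\<alpha>\<in>SS. \<integral>x. e0 * P * \<bar>g \<alpha> x\<bar> \<partial>lborel)"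
      unfolding IP_def by (rule sum_mono)
    also have "\<dots> = e0 * P * P" unfolding P_def by (simp add: sum_distrib_left)
    finally show ?thesis by (simp add: power2_eq_square mult_ac)
  qed
  define G where "G i j = (\<Sum>\<alpha>\<in>SS. \<integral>x. fb i \<alpha> x * fb j \<alpha> x \<partial>lborel)" for i j
  have BIL: "(\<Sum>\<alpha>\<in>SS. \<integral>x. (\<Sum>i<k. p i * fb i \<alpha> x) * (\<Sum>j<k. q j * fb j \<alpha> x) \<partial>lborel)
      = (\<Sum>i<k. \<Sum>j<k. p i * q j * G i j)" for p q
  proof -
    have ff: "integrable lborel (\<lambda>x. fb i \<alpha> x * fb j \<alpha> x)" if "i < k" "j < k" "\<alpha> \<in> SS" for i j \<alpha>
      using that by (intro L2B_prod_integrable[OF Bs Bf] L2)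
    have "(\<integral>x. (\<Sum>i<k. p i * fb i \<alpha> x) * (\<Sum>j<k. q j * fb j \<alpha> x) \<partial>lborel)
        = (\<Sum>i<k. \<Sum>j<k. p i * q j * (\<integral>x. fb i \<alpha> x * fb j \<alpha> x \<partial>lborel))" if a: "\<alpha> \<in> SS" for \<alpha>
    proof -
      have "(\<lambda>x. (\<Sum>i<k. p i * fb i \<alpha> x) * (\<Sum>j<k. q j * fb j \<alpha> x))
          = (\<lambda>x. \<Sum>i<k. \<Sum>j<k. p i * q j * (fb i \<alpha> x * fb j \<alpha> x))"
        by (auto simp: sum_product mult_ac)
      then have "(\<integral>x. (\<Sum>i<k. p i * fb i \<alpha> x) * (\<Sum>j<k. q j * fb j \<alpha> x) \<partial>lborel)
          = (\<integral>x. (\<Sum>i<k. \<Sum>j<k. p i * q j * (fb i \<alpha> x * fb j \<alpha> x)) \<partial>lborel)" by simp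
      also have "\<dots> = (\<Sum>i<k. \<integral>x. (\<Sum>j<k. p i * q j * (fb i \<alpha> x * fb j \<alpha> x)) \<partial>lborel)"
        using ff a by (intro Bochner_Integration.integral_sum Bochner_Integration.integrable_sum
            Bochner_Integration.integrable_mult_right) auto
      also have "\<dots> = (\<Sum>i<k. \<Sum>j<k. p i * q j * (\<integral>x. fb i \<alpha> x * fb j \<alpha> x \<partial>lborel))"
      proof (rule sum.cong[OF refl])
        fix i assume "i \<in> {..<k}"
        then show "(\<integral>x. (\<Sum>j<k. p i * q j * (fb i \<alpha> x * fb j \<alpha> x)) \<partial>lborel)
            = (\<Sum>j<k. p i * q j * (\<integral>x. fb i \<alpha> x * fb j \<alpha> x \<partial>lborel))"
          using ff a by (subst Bochner_Integration.integral_sum) auto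
      qed
      finally show ?thesis .
    qed
    then have "(\<Sum>\<alpha>\<in>SS. \<integral>x. (\<Sum>i<k. p i * fb i \<alpha> x) * (\<Sum>j<k. q j * fb j \<alpha> x) \<partial>lborel)
        = (\<Sum>\<alpha>\<in>SS. \<Sum>i<k. \<Sum>j<k. p i * q j * (\<integral>x. fb i \<alpha> x * fb j \<alpha> x \<partial>lborel))"
      by (rule sum.cong[OF refl])
    also have "\<dots> = (\<Sum>i<k. \<Sum>\<alpha>\<in>SS. \<Sum>j<k. p i * q j * (\<integral>x. fb i \<alpha> x * fb j \<alpha> x \<partial>lborel))"
      by (rule sum.swap)
    also have "\<dots> = (\<Sum>i<k. \<Sum>j<k. \<Sum>\<alpha>\<in>SS. p i * q j * (\<integral>x. fb i \<alpha> x * fb j \<alpha> x \<partial>lborel))"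
      by (intro sum.cong refl sum.swap)
    also have "\<dots> = (\<Sum>i<k. \<Sum>j<k. p i * q j * G i j)"
      unfolding G_def by (simp add: sum_distrib_left)
    finally show ?thesis .
  qed
  define Q where "Q = (\<Sum>\<alpha>\<in>SS. \<integral>x. g \<alpha> x * g \<alpha> x \<partial>lborel)"
  have Qe: "Q = (\<Sum>i<k. \<Sum>j<k. c i * c j * G i j)" unfolding Q_def g_def by (rule BIL)
  have IPe: "IP = (\<Sum>i<k. \<Sum>j<k. (c i * mus i) * c j * G i j)" unfolding IP_def g_def h_def by (rule BIL)
  have EI: "(\<integral>x. KopB K M (fb i) x \<alpha> * fb j \<alpha> x \<partial>lborel) = mus i * (\<integral>x. fb i \<alpha> x * fb j \<alpha> x \<partial>lborel)"
    if "i < k" "j < k" "\<alpha> \<in> SS" for i j \<alpha>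
  proof -
    have mi: "fb i \<beta> \<in> borel_measurable lborel" "fb j \<beta> \<in> borel_measurable lborel" if "\<beta> \<in> SS" for \<beta>
      using L2[OF \<open>i < k\<close> that] L2[OF \<open>j < k\<close> that] unfolding L2B_def by auto
    have km: "(\<lambda>x. KopB K M (fb i) x \<alpha>) \<in> borel_measurable lborel"
      by (rule KopB_meas[OF CK]) (use mi in \<open>auto simp: SS_def\<close>)
    have "(\<integral>x. KopB K M (fb i) x \<alpha> * fb j \<alpha> x \<partial>lborel) = (\<integral>x. mus i * (fb i \<alpha> x * fb j \<alpha> x) \<partial>lborel)"
    proof (rule integral_cong_AE)
      show "(\<lambda>x. KopB K M (fb i) x \<alpha> * fb j \<alpha> x) \<in> borel_measurable lborel" using km mi that by auto
      show "(\<lambda>x. mus i * (fb i \<alpha> x * fb j \<alpha> x)) \<in> borel_measurable lborel" using mi that by auto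
      show "AE x in lborel. KopB K M (fb i) x \<alpha> * fb j \<alpha> x = mus i * (fb i \<alpha> x * fb j \<alpha> x)"
        using eigB[OF that(1,3)]
      proof eventually_elim
        case (elim x)
        show ?case
        proof (cases "x \<in> B")
          case True
          then show ?thesis using elim by simp
        next
          case False
          then show ?thesis by (simp add: fb_def)
        qed
      qed
    qed
    then show ?thesis by simp
  qed
  have Gsym: "mus i * G i j = mus j * G i j" if "i < k" "j < k" for i j
  proof -
    have L2i: "\<And>\<beta>. \<beta> \<in> S M \<Longrightarrow> L2B B (fb i \<beta>)" and L2j: "\<And>\<beta>. \<beta> \<in> S M \<Longrightarrow> L2B B (fb j \<beta>)"
      using L2 that unfolding SS_def by auto
    have "(\<Sum>\<alpha>\<in>S M. \<integral>x. KopB K M (fb i) x \<alpha> * fb j \<alpha> x \<partial>lborel)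
        = (\<Sum>\<alpha>\<in>S M. \<integral>x. fb i \<alpha> x * KopB K M (fb j) x \<alpha> \<partial>lborel)"
      by (rule SYM[OF CK Bs Bf cov L2i L2j])
    moreover have "(\<Sum>\<alpha>\<in>S M. \<integral>x. KopB K M (fb i) x \<alpha> * fb j \<alpha> x \<partial>lborel) = mus i * G i j"
      unfolding G_def sum_distrib_left using EI that unfolding SS_def by (intro sum.cong refl) auto
    moreover have "(\<Sum>\<alpha>\<in>S M. \<integral>x. fb i \<alpha> x * KopB K M (fb j) x \<alpha> \<partial>lborel) = mus j * G i j"
      unfolding G_def sum_distrib_left using EI[OF that(2,1)] unfolding SS_def
      by (intro sum.cong refl) (simp add: mult.commute)
    ultimately show ?thesis by simp
  qed
  have Qpos: "(\<Sum>i<k. \<Sum>j<k. p i * p j * G i j) \<ge> 0" for p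
  proof -
    have "0 \<le> (\<Sum>\<alpha>\<in>SS. \<integral>x. (\<Sum>i<k. p i * fb i \<alpha> x) * (\<Sum>j<k. p j * fb j \<alpha> x) \<partial>lborel)"
      by (intro sum_nonneg integral_nonneg_AE) auto
    then show ?thesis using BIL[of p p] by simp
  qed
  have tQ: "t * Q \<le> IP"
  proof -
    define W where "W = mus ` {..<k}"
    define cl where "cl = (\<lambda>lam i. if mus i = lam then c i else 0)"
    have fW: "finite W" unfolding W_def by simp
    have G0: "G i j = 0" if "i < k" "j < k" "mus i \<noteq> mus j" for i j
      using Gsym[OF that(1,2)] that(3) by auto
    have "(\<Sum>lam\<in>W. (lam - t) * (\<Sum>i<k. \<Sum>j<k. cl lam i * cl lam j * G i j))
        = (\<Sum>lam\<in>W. \<Sum>i<k. \<Sum>j<k. (lam - t) * (cl lam i * cl lam j * G i j))"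
      by (simp add: sum_distrib_left)
    also have "\<dots> = (\<Sum>i<k. \<Sum>lam\<in>W. \<Sum>j<k. (lam - t) * (cl lam i * cl lam j * G i j))"
      by (rule sum.swap)
    also have "\<dots> = (\<Sum>i<k. \<Sum>j<k. \<Sum>lam\<in>W. (lam - t) * (cl lam i * cl lam j * G i j))"
      by (intro sum.cong refl sum.swap)
    also have "\<dots> = (\<Sum>i<k. \<Sum>j<k. c i * c j * (mus i - t) * G i j)"
    proof (intro sum.cong refl)
      fix i j assume i: "i \<in> {..<k}" and j: "j \<in> {..<k}"
      have "(\<Sum>lam\<in>W. (lam - t) * (cl lam i * cl lam j * G i j))
          = (\<Sum>lam\<in>W. if mus i = lam then (mus i - t) * (c i * (if mus j = mus i then c j else 0) * G i j) else 0)"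
        by (intro sum.cong refl) (auto simp: cl_def)
      also have "\<dots> = (mus i - t) * (c i * (if mus j = mus i then c j else 0) * G i j)"
        using i unfolding W_def by (subst sum.delta') auto
      also have "\<dots> = c i * c j * (mus i - t) * G i j"
        using G0[of i j] i j by auto
      finally show "(\<Sum>lam\<in>W. (lam - t) * (cl lam i * cl lam j * G i j)) = c i * c j * (mus i - t) * G i j" .
    qed
    finally have grp: "(\<Sum>i<k. \<Sum>j<k. c i * c j * (mus i - t) * G i j)
        = (\<Sum>lam\<in>W. (lam - t) * (\<Sum>i<k. \<Sum>j<k. cl lam i * cl lam j * G i j))" ..
    have nn: "0 \<le> (\<Sum>lam\<in>W. (lam - t) * (\<Sum>i<k. \<Sum>j<k. cl lam i * cl lam j * G i j))"
    proof (rule sum_nonneg)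
      fix lam assume "lam \<in> W"
      then have "lam > t" unfolding W_def using eig by auto
      then show "0 \<le> (lam - t) * (\<Sum>i<k. \<Sum>j<k. cl lam i * cl lam j * G i j)"
        using Qpos[of "cl lam"] by simp
    qed
    have eqIP: "(\<Sum>i<k. \<Sum>j<k. c i * c j * (mus i - t) * G i j) = IP - t * Q"
      unfolding IPe Qe by (simp add: sum_distrib_left sum_subtractf algebra_simps)
    show ?thesis using nn grp eqIP by linarith
  qed
  have gg: "integrable lborel (\<lambda>x. g \<alpha> x * g \<alpha> x)" if "\<alpha> \<in> SS" for \<alpha>
    by (rule L2B_prod_integrable[OF Bs Bf Lg[OF that] Lg[OF that]])
  have Qgt: "Q > 0"
  proof (rule ccontr)
    assume "\<not> Q > 0"
    moreover have "Q \<ge> 0" unfolding Q_def by (intro sum_nonneg integral_nonneg_AE) auto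
    ultimately have "Q = 0" by simp
    then have "\<forall>\<alpha>\<in>SS. (\<integral>x. g \<alpha> x * g \<alpha> x \<partial>lborel) = 0"
      unfolding Q_def using fS by (subst (asm) sum_nonneg_eq_0_iff) (auto intro: integral_nonneg_AE)
    then have "\<forall>\<alpha>\<in>SS. AE x in lborel. g \<alpha> x * g \<alpha> x = 0"
    proof (intro ballI)
      fix \<alpha> :: "'d \<Rightarrow> nat" assume z: "\<forall>\<alpha>\<in>SS. (\<integral>x. g \<alpha> x * g \<alpha> x \<partial>lborel) = 0" and a: "\<alpha> \<in> SS"
      then have "(\<integral>x. g \<alpha> x * g \<alpha> x \<partial>lborel) = 0" by blast
      then show "AE x in lborel. g \<alpha> x * g \<alpha> x = 0"
        using integral_nonneg_eq_0_iff_AE[OF gg[OF a]] by auto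
    qed
    then have "\<forall>\<alpha>\<in>S M. AE x in lborel. x \<in> ball 0 R \<longrightarrow> (\<Sum>i<k. c i * fs i x \<alpha>) = 0"
      unfolding SS_def
    proof (intro ballI)
      fix \<alpha> :: "'d \<Rightarrow> nat" assume "\<forall>\<alpha>\<in>S M. AE x in lborel. g \<alpha> x * g \<alpha> x = 0" "\<alpha> \<in> S M"
      then have "AE x in lborel. g \<alpha> x * g \<alpha> x = 0" by blast
      then show "AE x in lborel. x \<in> ball 0 R \<longrightarrow> (\<Sum>i<k. c i * fs i x \<alpha>) = 0"
        by eventually_elim (auto simp: g_def fb_def B_def)
    qed
    then have "\<forall>i<k. c i = 0" using indep by blast
    then show False using c(1) by blast
  qed
  have PQ: "P^2 \<le> card SS * V * Q"
  proof -
    have "P^2 = (\<Sum>\<beta>\<in>SS. 1 * (\<integral>y. \<bar>g \<beta> y\<bar> \<partial>lborel))^2" unfolding P_def by simp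
    also have "\<dots> \<le> (\<Sum>\<beta>\<in>SS. 1^2) * (\<Sum>\<beta>\<in>SS. (\<integral>y. \<bar>g \<beta> y\<bar> \<partial>lborel)^2)"
      by (rule Cauchy_Schwarz_ineq_sum)
    also have "\<dots> \<le> card SS * (\<Sum>\<beta>\<in>SS. V * (\<integral>y. (g \<beta> y)^2 \<partial>lborel))"
    proof -
      have "(\<Sum>\<beta>\<in>SS. (\<integral>y. \<bar>g \<beta> y\<bar> \<partial>lborel)^2) \<le> (\<Sum>\<beta>\<in>SS. V * (\<integral>y. (g \<beta> y)^2 \<partial>lborel))"
        by (rule sum_mono) (unfold V_def, rule CS_int[OF Bs Bf _ Lg], use Vp V_def in auto)
      then show ?thesis by (simp add: mult_left_mono)
    qed
    also have "\<dots> = card SS * V * Q"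
      unfolding Q_def by (simp add: sum_distrib_left power2_eq_square mult_ac)
    finally show ?thesis .
  qed
  have "t * Q \<le> e0 * (card SS * V * Q)"
    using tQ IPb PQ e0 by (meson mult_left_mono order_trans)
  then have "t \<le> e0 * V * card SS" using Qgt by (simp add: algebra_simps)
  then show False using tbig unfolding V_def B_def SS_def by simp
qed

lemma CNT:
  fixes K :: "real^'d \<Rightarrow> real^'d \<Rightarrow> real" and M :: nat and R t e0 Cb :: real
    and J :: "'j set" and a :: "('d \<Rightarrow> nat) \<Rightarrow> ('d \<Rightarrow> nat) \<Rightarrow> 'j \<Rightarrow> real^'d \<Rightarrow> real"
    and b :: "'j \<Rightarrow> real^'d \<Rightarrow> real"
  assumes cov: "covariance_kernel K" and CK: "Cinf_b K" and R: "R > 0"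
    and fJ: "finite J" and bm: "\<And>j. b j \<in> borel_measurable lborel" and bb: "\<And>j y. \<bar>b j y\<bar> \<le> Cb"
    and err: "\<And>\<alpha> \<beta> x y. \<alpha> \<in> S M \<Longrightarrow> \<beta> \<in> S M \<Longrightarrow> x \<in> ball 0 R \<Longrightarrow> y \<in> ball 0 R \<Longrightarrow>
        \<bar>Kab K \<alpha> \<beta> x y - (\<Sum>j\<in>J. a \<alpha> \<beta> j x * b j y)\<bar> \<le> e0"
    and e0: "e0 \<ge> 0"
    and tbig: "t > e0 * measure lborel (ball (0::real^'d) R) * card (S M :: ('d \<Rightarrow> nat) set)"
  shows "count_above K M R t \<le> enat (card (S M :: ('d \<Rightarrow> nat) set) * card J)"
  unfolding count_above_def
proof (rule Sup_least, clarify)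
  fix k :: nat and fs :: "nat \<Rightarrow> real^'d \<Rightarrow> ('d \<Rightarrow> nat) \<Rightarrow> real" and mus :: "nat \<Rightarrow> real"
  assume eig: "\<forall>i<k. t < mus i \<and> is_eigfun K M R (mus i) (fs i)"
    and indep: "\<forall>c. (\<forall>\<alpha>\<in>S M. AE x in lborel. x \<in> ball 0 R \<longrightarrow> (\<Sum>i<k. c i * fs i x \<alpha>) = 0) \<longrightarrow> (\<forall>i<k. c i = 0)"
  show "enat k \<le> enat (card (S M :: ('d \<Rightarrow> nat) set) * card J)"
  proof (rule ccontr)
    assume "\<not> ?thesis"
    then have "card (S M :: ('d \<Rightarrow> nat) set) * card J < k" by simp
    from CORE[OF cov CK R fJ bm bb err e0 tbig this eig indep] show False .
  qed
qed

lemma eigval_le: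
  assumes "0 \<le> t" "count_above K M R t < enat n"
  shows "eigval K M R n \<le> t"
  unfolding eigval_def
  by (rule cInf_lower) (use assms in \<open>auto intro: bdd_belowI[where m=0]\<close>)

definition ilist :: "'d::finite list" where
  "ilist = (SOME xs. distinct xs \<and> set xs = UNIV)"

lemma ilist: "distinct (ilist :: 'd::finite list)" "set (ilist :: 'd::finite list) = UNIV"
  "length (ilist :: 'd::finite list) = CARD('d)"
proof -
  have "\<exists>xs::'d list. distinct xs \<and> set xs = UNIV" using finite_distinct_list[of "UNIV :: 'd set"] by auto
  then have *: "distinct (ilist :: 'd list) \<and> set (ilist :: 'd list) = UNIV" unfolding ilist_def by (rule someI_ex)
  then show "distinct (ilist :: 'd::finite list)" "set (ilist :: 'd::finite list) = UNIV" by auto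
  show "length (ilist :: 'd::finite list) = CARD('d)" using * distinct_card by fastforce
qed

definition cube :: "real \<Rightarrow> real \<Rightarrow> ('d \<Rightarrow> nat) \<Rightarrow> (real^'d) set" where
  "cube R h z = {y. \<forall>i. - R + real (z i) * h \<le> y $ i \<and> y $ i < - R + (real (z i) + 1) * h}"

definition cen :: "real \<Rightarrow> real \<Rightarrow> ('d \<Rightarrow> nat) \<Rightarrow> real^'d" where
  "cen R h z = (\<chi> i. - R + (real (z i) + 1/2) * h)"

lemma cube_meas: "cube R h z \<in> sets lborel"
  unfolding cube_def by measurable

lemma cube_cen:
  assumes "y \<in> cube R h z"
  shows "\<bar>y $ i - cen R h z $ i\<bar> \<le> h / 2"
proof -
  have "- R + real (z i) * h \<le> y $ i" "y $ i < - R + (real (z i) + 1) * h"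
    using assms unfolding cube_def by auto
  moreover have "cen R h z $ i = - R + real (z i) * h + h / 2" unfolding cen_def by (simp add: algebra_simps)
  ultimately show ?thesis unfolding abs_le_iff by (simp add: algebra_simps)
qed

lemma cube_idx:
  fixes y :: "real^'d"
  assumes R: "R > 0" and m: "m \<ge> 1" and h: "h = 2 * R / m" and y: "y \<in> ball 0 R"
  shows "\<exists>z\<in>(\<Pi>\<^sub>E i\<in>UNIV. {..<m}). y \<in> cube R h z \<and> (\<forall>z'\<in>(\<Pi>\<^sub>E i\<in>UNIV. {..<m}). y \<in> cube R h z' \<longrightarrow> z' = z)"
proof -
  have hp: "h > 0" using R m h by simp
  have yi: "\<bar>y $ i\<bar> < R" for i using y component_le_norm_cart[of y i] by (simp add: dist_norm) 
  define z where "z i = nat \<lfloor>(y $ i + R) / h\<rfloor>" for i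
  have lo: "0 \<le> (y $ i + R) / h" for i using yi[of i] hp by simp
  have hi: "(y $ i + R) / h < m" for i
  proof -
    have "y $ i + R < 2 * R" using yi[of i] by simp
    then have "(y $ i + R) / h < 2 * R / h" using hp by (simp add: divide_strict_right_mono)
    also have "2 * R / h = m" using h R m by simp
    finally show ?thesis .
  qed
  have zr: "real (z i) = \<lfloor>(y $ i + R) / h\<rfloor>" for i unfolding z_def using lo[of i] by simp
  have zin: "z \<in> (\<Pi>\<^sub>E i\<in>UNIV. {..<m})"
  proof -
    have "\<lfloor>(y $ i + R) / h\<rfloor> < int m" for i using hi[of i] by (simp add: floor_less_iff)
    moreover have "0 \<le> \<lfloor>(y $ i + R) / h\<rfloor>" for i using lo[of i] by simp
    ultimately have "z i < m" for i unfolding z_def by (simp add: nat_less_iff)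
    then show ?thesis by auto
  qed
  have ycube: "y \<in> cube R h z"
    unfolding cube_def
  proof (clarify, intro conjI)
    fix i
    have a: "real (z i) \<le> (y $ i + R) / h" unfolding zr by linarith
    have b: "(y $ i + R) / h < real (z i) + 1" unfolding zr by linarith
    from a have "real (z i) * h \<le> y $ i + R" using hp by (simp add: le_divide_eq)
    then show "- R + real (z i) * h \<le> y $ i" by simp
    from b have "y $ i + R < (real (z i) + 1) * h" using hp by (simp add: divide_less_eq)
    then show "y $ i < - R + (real (z i) + 1) * h" by simp
  qed
  have uniq: "z' = z" if "y \<in> cube R h z'" for z'
  proof
    fix i
    have ci: "- R + real (z' i) * h \<le> y $ i \<and> y $ i < - R + (real (z' i) + 1) * h"
      using that unfolding cube_def by blast
    have a: "real (z' i) * h \<le> y $ i + R" "y $ i + R < (real (z' i) + 1) * h"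
      using ci by linarith+
    have "real (z' i) \<le> (y $ i + R) / h" using a(1) hp by (simp add: le_divide_eq)
    moreover have "(y $ i + R) / h < real (z' i) + 1" using a(2) hp by (simp add: divide_less_eq)
    ultimately have "\<lfloor>(y $ i + R) / h\<rfloor> = int (z' i)" by (intro floor_unique) auto
    then show "z' i = z i" unfolding z_def by simp
  qed
  show ?thesis using zin ycube uniq by blast
qed

lemma CUBE:
  fixes K :: "real^'d \<Rightarrow> real^'d \<Rightarrow> real" and M l m L :: nat and R h Bd :: real
  assumes CK: "Cinf_b K" and R: "R > 0" and m: "m \<ge> 1" and h: "h = 2 * R / m" and h1: "h \<le> 1"
    and Bd: "\<forall>ws. set ws \<subseteq> basis_dirs \<and> length ws \<le> L \<longrightarrow> (\<forall>z. \<bar>dd ws (joint K) z\<bar> \<le> Bd)"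
    and Lb: "\<forall>\<alpha>\<in>(S M :: ('d \<Rightarrow> nat) set). \<forall>\<beta>\<in>S M. length (kvs \<alpha> \<beta> :: ((real^'d) \<times> (real^'d)) list) + (l+1) * CARD('d) \<le> L"
  shows "\<exists>(J :: (('d \<Rightarrow> nat) \<times> nat list) set) a b. finite J \<and> card J = m ^ CARD('d) * (l+1) ^ CARD('d)
    \<and> (\<forall>j. b j \<in> borel_measurable lborel) \<and> (\<forall>j y. \<bar>b j y\<bar> \<le> 1)
    \<and> (\<forall>\<alpha> \<beta> x y. \<alpha> \<in> S M \<longrightarrow> \<beta> \<in> S M \<longrightarrow> x \<in> ball 0 R \<longrightarrow> y \<in> ball 0 R \<longrightarrow>
        \<bar>Kab K \<alpha> \<beta> x y - (\<Sum>j\<in>J. a \<alpha> \<beta> j x * b j y)\<bar> \<le> Bd * h ^ (l+1) * (l+2) ^ CARD('d))"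
proof -
  define Z where "Z = (\<Pi>\<^sub>E i\<in>(UNIV::'d set). {..<m})"
  define Pd where "Pd = Pset l CARD('d)"
  define J where "J = Z \<times> Pd"
  define b :: "('d \<Rightarrow> nat) \<times> nat list \<Rightarrow> real^'d \<Rightarrow> real"
    where "b = (\<lambda>(z, p) y. indicator (cube R h z) y * Mono ilist (cen R h z) p y)"
  define a :: "('d \<Rightarrow> nat) \<Rightarrow> ('d \<Rightarrow> nat) \<Rightarrow> ('d \<Rightarrow> nat) \<times> nat list \<Rightarrow> real^'d \<Rightarrow> real"
    where "a = (\<lambda>\<alpha> \<beta> (z, p) x. Coef K ilist (kvs \<alpha> \<beta>) (cen R h z) p x)"
  have h0: "h \<ge> 0" using h R by simp
  have fZ: "finite Z" unfolding Z_def by (rule finite_PiE) auto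
  have fP: "finite Pd" unfolding Pd_def by (rule finite_Pset)
  have fJ: "finite J" unfolding J_def using fZ fP by simp
  have cZ: "card Z = m ^ CARD('d)" unfolding Z_def by (simp add: card_PiE)
  have cJ: "card J = m ^ CARD('d) * (l+1) ^ CARD('d)"
    unfolding J_def using cZ by (simp add: card_cartesian_product Pd_def card_Pset)
  have bm: "\<forall>j. b j \<in> borel_measurable lborel"
  proof
    fix j :: "('d \<Rightarrow> nat) \<times> nat list"
    obtain z p where j: "j = (z, p)" by (cases j)
    have m1: "Mono ilist (cen R h z) p \<in> borel_measurable borel"
      by (rule borel_measurable_continuous_onI) (rule Mono_cont)
    have m2: "(indicator (cube R h z) :: real^'d \<Rightarrow> real) \<in> borel_measurable borel"
      using cube_meas[of R h z] by (simp add: borel_measurable_indicator)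
    have "(\<lambda>y. indicator (cube R h z) y * Mono ilist (cen R h z) p y) \<in> borel_measurable borel"
      by (rule borel_measurable_times[OF m2 m1])
    then show "b j \<in> borel_measurable lborel" unfolding j b_def by simp
  qed
  have bb: "\<forall>j y. \<bar>b j y\<bar> \<le> 1"
  proof (intro allI)
    fix j :: "('d \<Rightarrow> nat) \<times> nat list" and y :: "real^'d"
    obtain z p where j: "j = (z, p)" by (cases j)
    show "\<bar>b j y\<bar> \<le> 1"
    proof (cases "y \<in> cube R h z")
      case True
      have "\<forall>k. \<bar>y $ k - cen R h z $ k\<bar> \<le> 1"
      proof
        fix k show "\<bar>y $ k - cen R h z $ k\<bar> \<le> 1" using cube_cen[OF True, of k] h1 h0 by linarith
      qed
      then show ?thesis unfolding j b_def using True Mono_bound by simp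
    next
      case False
      then show ?thesis unfolding j b_def by simp
    qed
  qed
  have err: "\<bar>Kab K \<alpha> \<beta> x y - (\<Sum>j\<in>J. a \<alpha> \<beta> j x * b j y)\<bar> \<le> Bd * h ^ (l+1) * (l+2) ^ CARD('d)"
    if a1: "\<alpha> \<in> S M" and b1: "\<beta> \<in> S M" and x: "x \<in> ball 0 R" and y: "y \<in> ball 0 R" for \<alpha> \<beta> x y
  proof -
    obtain z0 where z0: "z0 \<in> Z" "y \<in> cube R h z0" and uq: "\<And>z'. z' \<in> Z \<Longrightarrow> y \<in> cube R h z' \<Longrightarrow> z' = z0"
      using cube_idx[OF R m h y] unfolding Z_def by blast
    have "(\<Sum>j\<in>J. a \<alpha> \<beta> j x * b j y)
        = (\<Sum>z\<in>Z. \<Sum>p\<in>Pd. Coef K ilist (kvs \<alpha> \<beta>) (cen R h z) p x * (indicator (cube R h z) y * Mono ilist (cen R h z) p y))"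
      unfolding J_def a_def b_def sum.cartesian_product by (intro sum.cong refl) (auto split: prod.splits)
    also have "\<dots> = (\<Sum>z\<in>Z. indicator (cube R h z) y * T K l ilist (kvs \<alpha> \<beta>) (cen R h z) x y)"
    proof (rule sum.cong[OF refl])
      fix z assume "z \<in> Z"
      have "T K l ilist (kvs \<alpha> \<beta>) (cen R h z) x y = (\<Sum>p\<in>Pd. Coef K ilist (kvs \<alpha> \<beta>) (cen R h z) p x * Mono ilist (cen R h z) p y)"
        unfolding Pd_def using T_expand[OF ilist(1), of K l "kvs \<alpha> \<beta>" "cen R h z" x y] ilist(3)[where 'd='d] by simp
      then show "(\<Sum>p\<in>Pd. Coef K ilist (kvs \<alpha> \<beta>) (cen R h z) p x * (indicator (cube R h z) y * Mono ilist (cen R h z) p y))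
          = indicator (cube R h z) y * T K l ilist (kvs \<alpha> \<beta>) (cen R h z) x y"
        by (simp add: sum_distrib_left mult_ac)
    qed
    also have "\<dots> = (\<Sum>z\<in>Z. if z = z0 then T K l ilist (kvs \<alpha> \<beta>) (cen R h z) x y else 0)"
    proof (rule sum.cong[OF refl])
      fix z assume zZ: "z \<in> Z"
      show "indicator (cube R h z) y * T K l ilist (kvs \<alpha> \<beta>) (cen R h z) x y
          = (if z = z0 then T K l ilist (kvs \<alpha> \<beta>) (cen R h z) x y else 0)"
      proof (cases "z = z0")
        case True
        then show ?thesis using z0(2) by simp
      next
        case False
        then have "y \<notin> cube R h z" using uq[OF zZ] by blast
        then show ?thesis using False by simp
      qed
    qed
    also have "\<dots> = T K l ilist (kvs \<alpha> \<beta>) (cen R h z0) x y" using z0(1) fZ by (subst sum.delta) auto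
    finally have sumeq: "(\<Sum>j\<in>J. a \<alpha> \<beta> j x * b j y) = T K l ilist (kvs \<alpha> \<beta>) (cen R h z0) x y" .
    have "\<bar>dd (kvs \<alpha> \<beta>) (joint K) (x, y) - T K l ilist (kvs \<alpha> \<beta>) (cen R h z0) x y\<bar>
        \<le> Bd * h ^ (l+1) * (l+2) ^ length (ilist :: 'd list)"
    proof (rule T_err[OF CK Bd h0 h1])
      show "distinct (ilist :: 'd list)" by (rule ilist(1))
      show "set (kvs \<alpha> \<beta>) \<subseteq> basis_dirs" by (rule kvs_basis)
      have "length (kvs \<alpha> \<beta>) + (l+1) * CARD('d) \<le> L" using Lb a1 b1 by blast
      then show "length (kvs \<alpha> \<beta>) + (l + 1) * length (ilist :: 'd list) \<le> L" using ilist(3)[where 'd='d] by simp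
      show "\<forall>k. k \<notin> set ilist \<longrightarrow> y $ k = cen R h z0 $ k" using ilist(2)[where 'd='d] by simp
      show "\<forall>k. \<bar>y $ k - cen R h z0 $ k\<bar> \<le> h"
      proof
        fix k show "\<bar>y $ k - cen R h z0 $ k\<bar> \<le> h" using cube_cen[OF z0(2), of k] h0 by linarith
      qed
    qed
    then show ?thesis unfolding sumeq Kab_kvs using ilist(3)[where 'd='d] by simp
  qed
  show ?thesis using fJ cJ bm bb err by blast
qed

lemma EB:
  fixes K :: "real^'d \<Rightarrow> real^'d \<Rightarrow> real" and M n :: nat and R t ee Cb :: real
    and J :: "'j set" and a :: "('d \<Rightarrow> nat) \<Rightarrow> ('d \<Rightarrow> nat) \<Rightarrow> 'j \<Rightarrow> real^'d \<Rightarrow> real"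
    and b :: "'j \<Rightarrow> real^'d \<Rightarrow> real"
  assumes cov: "covariance_kernel K" and CK: "Cinf_b K" and R: "R > 0"
    and fJ: "finite J" and bm: "\<And>j. b j \<in> borel_measurable lborel" and bb: "\<And>j y. \<bar>b j y\<bar> \<le> Cb"
    and err: "\<And>\<alpha> \<beta> x y. \<alpha> \<in> S M \<Longrightarrow> \<beta> \<in> S M \<Longrightarrow> x \<in> ball 0 R \<Longrightarrow> y \<in> ball 0 R \<Longrightarrow>
        \<bar>Kab K \<alpha> \<beta> x y - (\<Sum>j\<in>J. a \<alpha> \<beta> j x * b j y)\<bar> \<le> ee"
    and ee: "ee \<ge> 0"
    and tbig: "t > ee * measure lborel (ball (0::real^'d) R) * card (S M :: ('d \<Rightarrow> nat) set)"
    and t0: "t \<ge> 0"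
    and n: "card (S M :: ('d \<Rightarrow> nat) set) * card J < n"
  shows "eigval K M R n \<le> t"
proof (rule eigval_le[OF t0])
  have "count_above K M R t \<le> enat (card (S M :: ('d \<Rightarrow> nat) set) * card J)"
    by (rule CNT[OF cov CK R fJ bm bb err ee tbig])
  also have "\<dots> < enat n" using n by simp
  finally show "count_above K M R t < enat n" .
qed

lemma vol_ball: "R \<ge> 0 \<Longrightarrow> measure lborel (ball (0::real^'d) R) = R ^ CARD('d) * measure lborel (ball (0::real^'d) 1)"
  using content_ball_conv_unit_ball[of R "0::real^'d"] by simp

theorem lemma4p3:
  fixes K :: "real^'d \<Rightarrow> real^'d \<Rightarrow> real"
    and M l :: nat
  assumes "covariance_kernel K"
    and "Cinf_b K"
  shows "\<exists>A>0. \<forall>R\<ge>1. \<forall>n\<ge>1.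
           eigval K M R n \<le> A * R ^ (l + 1 + CARD('d)) / real n powr (real (l + 1) / real CARD('d))"
proof -
  note cov = assms(1) and CK = assms(2)
  define d where "d = CARD('d)"
  have d0: "d > 0" unfolding d_def by simp
  define SS where "SS = (S M :: ('d \<Rightarrow> nat) set)"
  have fS: "finite SS" unfolding SS_def by (rule finite_S)
  define s where "s = card SS"
  have s1: "s \<ge> 1" unfolding s_def using fS zero_in_S[of M] unfolding SS_def
    by (metis One_nat_def Suc_leI card_gt_0_iff empty_iff)
  define L where "L = Max ((\<lambda>(\<alpha>, \<beta>). length (kvs \<alpha> \<beta> :: ((real^'d) \<times> (real^'d)) list)) ` (SS \<times> SS)) + (l+1) * d"
  have Lb: "\<forall>\<alpha>\<in>(S M :: ('d \<Rightarrow> nat) set). \<forall>\<beta>\<in>S M. length (kvs \<alpha> \<beta> :: ((real^'d) \<times> (real^'d)) list) + (l+1) * CARD('d) \<le> L"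
  proof (intro ballI)
    fix \<alpha> \<beta> :: "'d \<Rightarrow> nat" assume "\<alpha> \<in> S M" "\<beta> \<in> S M"
    then have "length (kvs \<alpha> \<beta> :: ((real^'d) \<times> (real^'d)) list)
        \<le> Max ((\<lambda>(\<alpha>, \<beta>). length (kvs \<alpha> \<beta> :: ((real^'d) \<times> (real^'d)) list)) ` (SS \<times> SS))"
      using fS unfolding SS_def by (intro Max_ge) auto
    then show "length (kvs \<alpha> \<beta> :: ((real^'d) \<times> (real^'d)) list) + (l+1) * CARD('d) \<le> L"
      unfolding L_def d_def by simp
  qed
  obtain Bd where Bd: "\<forall>ws. set ws \<subseteq> basis_dirs \<and> length ws \<le> L \<longrightarrow> (\<forall>z. \<bar>dd ws (joint K) z\<bar> \<le> Bd)"
    using Cb_uniform_bound[OF CK] by blast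
  have Bd0: "Bd \<ge> 0"
  proof -
    have "\<bar>dd [] (joint K) 0\<bar> \<le> Bd" using Bd[rule_format, of "[]" 0] by simp
    then show ?thesis by (smt (verit) abs_ge_zero)
  qed
  have Kb: "\<bar>Kab K \<alpha> \<beta> x y\<bar> \<le> Bd" if "\<alpha> \<in> S M" "\<beta> \<in> S M" for \<alpha> \<beta> x y
  proof -
    have "length (kvs \<alpha> \<beta> :: ((real^'d) \<times> (real^'d)) list) \<le> L" using Lb that by fastforce
    then show ?thesis unfolding Kab_kvs using Bd kvs_basis by blast
  qed
  define V1 where "V1 = measure lborel (ball (0::real^'d) 1)"
  have V1: "V1 > 0" unfolding V1_def using content_ball_pos[of 1 "0::real^'d"] by simp
  define C0 where "C0 = real s * real (l+1) ^ d"
  have C0: "C0 \<ge> 1"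
  proof -
    have a1: "1 \<le> real s" using s1 by simp
    have a2: "1 \<le> real (l+1) ^ d" by (rule one_le_power) simp
    show ?thesis unfolding C0_def using mult_mono[OF a1 a2] by simp
  qed
  define w where "w = (2 * C0) powr (1 / real d)"
  have w0: "w > 0" unfolding w_def using C0 by simp
  have wd: "w ^ d = 2 * C0"
  proof -
    have "w ^ d = w powr real d" using w0 by (rule powr_realpow[symmetric])
    also have "\<dots> = (2 * C0) powr (1 / real d * real d)" unfolding w_def by (simp add: powr_powr)
    also have "\<dots> = 2 * C0" using d0 C0 by simp
    finally show ?thesis .
  qed
  define X where "X = 4 ^ (l+1) * w ^ (l+1) * real (l+2) ^ d * V1 * real s"
  have X0: "X > 0" unfolding X_def using w0 V1 s1 by simp
  define A where "A = (Bd + 1) * X"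
  have A0: "A > 0" unfolding A_def using Bd0 X0 by simp
  have main: "eigval K M R n \<le> A * R ^ (l + 1 + d) / real n powr (real (l + 1) / real d)"
    if R: "R \<ge> 1" and n: "n \<ge> 1" for R :: real and n :: nat
  proof -
    have R0: "R > 0" using R by simp
    define u where "u = real n powr (1 / real d)"
    have u0: "u > 0" using n unfolding u_def by simp
    have pw: "real n powr (real (l+1) / real d) = u ^ (l+1)"
    proof -
      have "u ^ (l+1) = u powr real (l+1)" using u0 by (rule powr_realpow[symmetric])
      also have "\<dots> = real n powr (1 / real d * real (l+1))" unfolding u_def by (simp add: powr_powr)
      finally show ?thesis by simp
    qed
    have ud: "u ^ d = real n"
    proof -
      have "u ^ d = u powr real d" using u0 by (rule powr_realpow[symmetric])
      also have "\<dots> = real n powr (1 / real d * real d)" unfolding u_def by (simp add: powr_powr)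
      also have "\<dots> = real n" using d0 n by simp
      finally show ?thesis .
    qed
    have vol: "measure lborel (ball (0::real^'d) R) = R ^ d * V1"
      unfolding V1_def d_def using vol_ball[of R] R0 by simp
    have cS: "card (S M :: ('d \<Rightarrow> nat) set) = s" unfolding s_def SS_def ..
    define T where "T = A * R ^ (l+1+d) / u ^ (l+1)"
    have T0: "T \<ge> 0" using A0 R0 u0 by (simp add: T_def)
    have RV: "R ^ d * V1 * real s > 0" using R0 V1 s1 by simp
    have "eigval K M R n \<le> T"
    proof (cases "u < 4 * R * w")
      case True
      have tb: "Bd * measure lborel (ball (0::real^'d) R) * card (S M :: ('d \<Rightarrow> nat) set) < T"
      proof -
        have up: "u ^ (l+1) < (4 * R * w) ^ (l+1)" using True u0 by (intro power_strict_mono) auto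
        have l2: "1 \<le> real (l+2) ^ d" by (rule one_le_power) simp
        have "Bd * measure lborel (ball (0::real^'d) R) * card (S M :: ('d \<Rightarrow> nat) set) = Bd * (R ^ d * V1 * real s)"
          unfolding vol cS by (simp add: mult_ac)
        also have "\<dots> < (Bd + 1) * (R ^ d * V1 * real s)" using RV by (intro mult_strict_right_mono) auto
        also have "\<dots> \<le> (Bd + 1) * (real (l+2) ^ d * (R ^ d * V1 * real s))"
          using RV Bd0 l2 by (intro mult_left_mono) (auto simp: mult_le_cancel_right1)
        also have "\<dots> = A * R ^ (l+1+d) / (4 * R * w) ^ (l+1)"
          unfolding A_def X_def using R0 w0 by (simp add: power_mult_distrib power_add field_simps)
        also have "\<dots> < A * R ^ (l+1+d) / u ^ (l+1)"
          using up u0 A0 R0 w0 by (intro divide_strict_left_mono) auto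
        finally show ?thesis unfolding T_def .
      qed
      show ?thesis
        by (rule EB[OF cov CK R0, where J="{}::unit set" and b="\<lambda>_ _. 0" and a="\<lambda>_ _ _ _. 0" and Cb=0 and ee=Bd])
          (use Kb Bd0 tb T0 n in auto)
    next
      case False
      define rho where "rho = u / w"
      have rho4: "rho \<ge> 4 * R" using False w0 unfolding rho_def by (simp add: le_divide_eq mult_ac)
      define m where "m = nat \<lfloor>rho\<rfloor>"
      have mr: "real m \<le> rho" "rho - 1 < real m" using rho4 R0 unfolding m_def by linarith+
      have m1: "m \<ge> 1" using mr rho4 R by linarith
      have mh: "real m \<ge> rho / 2" using mr rho4 R by linarith
      define h where "h = 2 * R / real m"
      have rho0: "rho > 0" using rho4 R0 by linarith
      have h0: "h \<ge> 0" unfolding h_def using R0 by simp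
      have h4: "h \<le> 4 * R / rho"
      proof -
        have "h = 2 * R / real m" by (simp add: h_def)
        also have "\<dots> \<le> 2 * R / (rho / 2)" using mh rho0 R0 by (intro divide_left_mono) auto
        also have "\<dots> = 4 * R / rho" by simp
        finally show ?thesis .
      qed
      have "4 * R / rho \<le> 1" using rho4 rho0 by (simp add: divide_le_eq)
      then have hle1: "h \<le> 1" using h4 by linarith
      obtain J :: "(('d \<Rightarrow> nat) \<times> nat list) set" and a b where
        fJ: "finite J" and cJ: "card J = m ^ CARD('d) * (l+1) ^ CARD('d)"
        and bm: "\<forall>j. b j \<in> borel_measurable lborel" and bb: "\<forall>j y. \<bar>b j y\<bar> \<le> 1"
        and err: "\<forall>\<alpha> \<beta> x y. \<alpha> \<in> S M \<longrightarrow> \<beta> \<in> S M \<longrightarrow> x \<in> ball 0 R \<longrightarrow> y \<in> ball 0 R \<longrightarrow>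
          \<bar>Kab K \<alpha> \<beta> x y - (\<Sum>j\<in>J. a \<alpha> \<beta> j x * b j y)\<bar> \<le> Bd * h ^ (l+1) * (l+2) ^ CARD('d)"
        using CUBE[OF CK R0 m1 h_def hle1 Bd Lb] by blast
      have cnt: "card (S M :: ('d \<Rightarrow> nat) set) * card J < n"
      proof -
        have "real (card (S M :: ('d \<Rightarrow> nat) set) * card J) = C0 * real m ^ d"
          unfolding cS cJ C0_def d_def by (simp add: power_mult_distrib)
        also have "\<dots> \<le> C0 * rho ^ d" using mr C0 by (intro mult_left_mono power_mono) auto
        also have "\<dots> = C0 * (u ^ d / w ^ d)" unfolding rho_def by (simp add: power_divide)
        also have "\<dots> = real n / 2" unfolding ud wd using C0 by simp
        also have "\<dots> < real n" using n by simp
        finally show ?thesis by linarith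
      qed
      define e0 where "e0 = Bd * h ^ (l+1) * real (l+2) ^ d"
      have e00: "e0 \<ge> 0" unfolding e0_def using Bd0 h0 by simp
      have tb: "e0 * measure lborel (ball (0::real^'d) R) * card (S M :: ('d \<Rightarrow> nat) set) < T"
      proof -
        have hp: "h ^ (l+1) \<le> (4 * R * w / u) ^ (l+1)"
          using h4 h0 unfolding rho_def using w0 u0 by (intro power_mono) (auto simp: field_simps)
        have "e0 * measure lborel (ball (0::real^'d) R) * card (S M :: ('d \<Rightarrow> nat) set)
            = Bd * h ^ (l+1) * (real (l+2) ^ d * (R ^ d * V1 * real s))"
          unfolding e0_def vol cS by (simp add: mult_ac)
        also have "\<dots> \<le> Bd * (4 * R * w / u) ^ (l+1) * (real (l+2) ^ d * (R ^ d * V1 * real s))"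
          using hp Bd0 RV by (intro mult_right_mono mult_left_mono) auto
        also have "\<dots> = Bd * X * (R ^ (l+1+d) / u ^ (l+1))"
          unfolding X_def by (simp add: power_mult_distrib power_divide power_add field_simps)
        also have "\<dots> < (Bd + 1) * X * (R ^ (l+1+d) / u ^ (l+1))"
          using X0 R0 u0 by (intro mult_strict_right_mono) auto
        also have "\<dots> = T" unfolding T_def A_def by simp
        finally show ?thesis .
      qed
      show ?thesis
        by (rule EB[OF cov CK R0 fJ _ _ _ e00 tb T0 cnt, where Cb=1 and a=a])
          (use bm bb err[unfolded d_def] in \<open>auto simp: e0_def d_def\<close>)
    qed
    then show ?thesis unfolding T_def pw .
  qed
  show ?thesis using A0 main unfolding d_def by blast
qed


end
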